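(* Fix $g\ge2$ and $n\ge2$. Consider systems of numbers $\langle\tau_{d_1}\cdots\tau_{d_k}\rangle^\bullet_g$ indexed by all $k\ge1$ and $(d_1,\dots,d_k)\in\mathbb{Z}^k$ with $d_1+\cdots+d_k=g-2+k$, symmetric under permutations of the $d_i$, and satisfying the string equation $$\langle\tau_{d_1}\cdots\tau_{d_k}\tau_0\rangle^\bullet_g=\sum_{j=1}^k\langle\tau_{d_1}\cdots\tau_{d_j-1}\cdots\tau_{d_k}\rangle^\bullet_g$$ for all $(d_1,\dots,d_k)\in\mathbb{Z}^k$ with $\sum d_i=g-1+k$. Such a system is uniquely determined by its values on tuples with all $d_i\neq0$ ("initial values"), which may be prescribed arbitrarily (symmetrically), and every value is then a linear combination with nonnegative integer coefficients of initial values. Treat the initial values (one variable for each such tuple up to permutation) as independent indeterminates, so that $$\mathcal{E}_{g,n}(\vec a):=\sum_{k=1}^n\frac{(-1)^k}{k!}\sum_{(I_1,\dots,I_k)}\ \sum_{\substack{d_1,\dots,d_k\in\mathbb{Z}\\ d_1+\cdots+d_k=g-2+k}}\langle\tau_{d_1}\cdots\tau_{d_k}\rangle^\bullet_g\prod_{j=1}^kQ_{d_j+|I_j|-1}\big(a_{[I_j]}\big)$$ is a polynomial in formal variables $a_1,\dots,a_n$ whose coefficients are linear in the initial values. Then for every initial value $\langle\tau_{d_1}\cdots\tau_{d_k}\rangle^\bullet_g$ (all $d_i\ne0$) in which at least one $d_i$ is negative, the coefficient $\partial\mathcal{E}_{g,n}(\vec a)/\partial\langle\tau_{d_1}\cdots\tau_{d_k}\rangle^\bullet_g$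 is identically zero as a polynomial in $a_1,\dots,a_n$.
   Context: $(I_1,\dots,I_k)$ runs over ordered $k$-tuples of nonempty pairwise disjoint subsets of $\{1,\dots,n\}$ with union $\{1,\dots,n\}$; $a_{[I]}:=\sum_{\ell\in I}a_\ell$. $Q_m(a):=\frac{(-1)^m}{2^m m!}\prod_{k=1}^{2m}(a+1-\frac k2)$ for $m\ge0$ and $Q_m:=0$ for $m<0$ (so the sum defining $\mathcal{E}_{g,n}$ is finite). *)

theory Defs
  imports Complex_Main "HOL-Library.Multiset"
begin

definition Qpol :: "int \<Rightarrow> real \<Rightarrow> real" where
  "Qpol m a = (if m < 0 then 0 else
     ((-1) ^ nat m / (2 ^ nat m * fact (nat m))) *
     (\<Prod>k\<in>{1..2 * nat m}. (a + 1 - real k / 2)))"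

definition corr_dom :: "nat \<Rightarrow> int list \<Rightarrow> bool" where
  "corr_dom g ds \<longleftrightarrow> length ds \<ge> 1 \<and> sum_list ds = int g - 2 + int (length ds)"

definition string_system :: "nat \<Rightarrow> (int list \<Rightarrow> real) \<Rightarrow> bool" where
  "string_system g tau \<longleftrightarrow>
     (\<forall>ds es. corr_dom g ds \<longrightarrow> mset ds = mset es \<longrightarrow> tau ds = tau es) \<and>
     (\<forall>ds. length ds \<ge> 1 \<longrightarrow> sum_list ds = int g - 1 + int (length ds) \<longrightarrow>
        tau (ds @ [0]) = (\<Sum>j<length ds. tau (ds[j := ds ! j - 1])))"

definition initial_tuple :: "nat \<Rightarrow> int list \<Rightarrow> bool" where
  "initial_tuple g ds \<longleftrightarrow> corr_dom g ds \<and> (\<forall>d\<in>set ds. d \<noteq> 0)"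

definition ordered_set_partitions :: "nat \<Rightarrow> nat \<Rightarrow> nat set list set" where
  "ordered_set_partitions n k = {Is. length Is = k \<and> (\<forall>j<k. Is ! j \<noteq> {}) \<and>
      (\<forall>i<k. \<forall>j<k. i \<noteq> j \<longrightarrow> Is ! i \<inter> Is ! j = {}) \<and> \<Union>(set Is) = {1..n}}"

text \<open>The (finite) set of d-tuples over which the inner sum effectively runs: sum g-2+k, and
  all Q-indices d_j + |I_j| - 1 nonnegative (the other terms vanish since Q_m = 0 for m < 0).\<close>
definition d_range :: "nat \<Rightarrow> nat set list \<Rightarrow> int list set" where
  "d_range g Is = {ds. length ds = length Is \<and> sum_list ds = int g - 2 + int (length Is) \<and>
      (\<forall>j<length Is. ds ! j + int (card (Is ! j)) - 1 \<ge> 0)}"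

definition E_gn :: "nat \<Rightarrow> nat \<Rightarrow> (int list \<Rightarrow> real) \<Rightarrow> (nat \<Rightarrow> real) \<Rightarrow> real" where
  "E_gn g n tau a = (\<Sum>k=1..n. ((-1) ^ k / fact k) *
     (\<Sum>Is\<in>ordered_set_partitions n k. \<Sum>ds\<in>d_range g Is.
        tau ds * (\<Prod>j<k. Qpol (ds ! j + int (card (Is ! j)) - 1) (\<Sum>l\<in>Is ! j. a l))))"

end

theory Submission
  imports Defs "HOL-Computational_Algebra.Formal_Power_Series" "HOL-Computational_Algebra.Polynomial"
begin

unbundle fps_syntax

typedef (overloaded) 'a uf = "{f :: nat set \<Rightarrow> 'a::zero. \<forall>J. infinite J \<longrightarrow> f J = 0}"
  by (intro exI[of _ "\<lambda>_. 0"]) auto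

setup_lifting type_definition_uf

lift_definition ufc :: "'a::zero uf \<Rightarrow> nat set \<Rightarrow> 'a" is "\<lambda>f. f" .

lemma ufc_inf: "infinite J \<Longrightarrow> ufc f J = 0"
  by transfer blast

lemma uf_eqI:
  assumes "\<And>J. finite J \<Longrightarrow> ufc f J = ufc g J" shows "f = g"
proof -
  have "ufc f J = ufc g J" for J
    using assms[of J] ufc_inf[of J f] ufc_inf[of J g] by (cases "finite J") auto
  then show ?thesis by (metis Rep_uf_inject ext ufc.rep_eq)
qed

definition conv :: "(nat set \<Rightarrow> 'a::comm_ring_1) \<Rightarrow> (nat set \<Rightarrow> 'a) \<Rightarrow> nat set \<Rightarrow> 'a" where
  "conv f g J = (if finite J then (\<Sum>A\<in>Pow J. f A * g (J - A)) else 0)"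

lemma conv_comm: "conv f g = conv g f"
proof (rule ext)
  fix J show "conv f g J = conv g f J"
  proof (cases "finite J")
    case True
    have "(\<Sum>A\<in>Pow J. f A * g (J - A)) = (\<Sum>A\<in>Pow J. g A * f (J - A))"
      by (rule sum.reindex_bij_witness[of _ "\<lambda>A. J - A" "\<lambda>A. J - A"])
         (auto simp: double_diff mult.commute)
    then show ?thesis using True by (simp add: conv_def)
  qed (simp add: conv_def)
qed

lemma conv_fin: "finite J \<Longrightarrow> conv f g J = (\<Sum>A\<in>Pow J. f A * g (J - A))"
  by (simp add: conv_def)

lemma conv_assoc: "conv (conv f g) h = conv f (conv g h)"
proof (rule ext)
  fix J show "conv (conv f g) h J = conv f (conv g h) J"
  proof (cases "finite J")
    case True
    have fs: "\<And>A. A \<in> Pow J \<Longrightarrow> finite A" using True by (auto intro: finite_subset)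
    have fP: "finite (Pow J)" using True by simp
    have fP2: "\<And>A. A \<in> Pow J \<Longrightarrow> finite (Pow A)" using fs by simp
    have fP3: "\<And>A. A \<in> Pow J \<Longrightarrow> finite (Pow (J - A))" using True by simp
    have "conv (conv f g) h J = (\<Sum>A\<in>Pow J. conv f g A * h (J - A))"
      by (rule conv_fin[OF True])
    also have "\<dots> = (\<Sum>A\<in>Pow J. (\<Sum>B\<in>Pow A. f B * g (A - B)) * h (J - A))"
      by (rule sum.cong[OF refl]) (simp add: conv_fin fs)
    also have "\<dots> = (\<Sum>A\<in>Pow J. \<Sum>B\<in>Pow A. f B * g (A - B) * h (J - A))"
      by (simp only: sum_distrib_right)
    also have "\<dots> = (\<Sum>(A,B)\<in>(SIGMA A:Pow J. Pow A). f B * g (A - B) * h (J - A))"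
      by (rule sum.Sigma[OF fP]) (rule ballI, erule fP2)
    also have "\<dots> = (\<Sum>(B,C)\<in>(SIGMA B:Pow J. Pow (J - B)). f B * g C * h (J - B - C))"
    proof (rule sum.reindex_bij_witness[of _ "\<lambda>(B,C). (B \<union> C, B)" "\<lambda>(A,B). (B, A - B)"])
      fix p assume "p \<in> (SIGMA A:Pow J. Pow A)"
      then obtain A B where p: "p = (A,B)" "A \<subseteq> J" "B \<subseteq> A" by auto
      show "(case (case p of (A, B) \<Rightarrow> (B, A - B)) of (B, C) \<Rightarrow> (B \<union> C, B)) = p"
        using p by auto
      show "(case p of (A, B) \<Rightarrow> (B, A - B)) \<in> (SIGMA B:Pow J. Pow (J - B))"
        using p by auto
      have "J - B - (A - B) = J - A" using p by auto
      then show "(case case p of (A, B) \<Rightarrow> (B, A - B) of (B, C) \<Rightarrow> f B * g C * h (J - B - C)) =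
          (case p of (A, B) \<Rightarrow> f B * g (A - B) * h (J - A))" using p by simp
    next
      fix p assume "p \<in> (SIGMA B:Pow J. Pow (J - B))"
      then obtain B C where p: "p = (B,C)" "B \<subseteq> J" "C \<subseteq> J - B" by auto
      show "(case (case p of (B, C) \<Rightarrow> (B \<union> C, B)) of (A, B) \<Rightarrow> (B, A - B)) = p"
        using p by auto
      show "(case p of (B, C) \<Rightarrow> (B \<union> C, B)) \<in> (SIGMA A:Pow J. Pow A)"
        using p by auto
    qed
    also have "\<dots> = (\<Sum>B\<in>Pow J. \<Sum>C\<in>Pow (J - B). f B * g C * h (J - B - C))"
      by (rule sum.Sigma[OF fP, symmetric]) (rule ballI, erule fP3)
    also have "\<dots> = (\<Sum>B\<in>Pow J. f B * (\<Sum>C\<in>Pow (J - B). g C * h (J - B - C)))"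
      by (simp only: sum_distrib_left mult.assoc)
    also have "\<dots> = conv f (conv g h) J"
      by (simp only: conv_fin[OF True] conv_fin[OF finite_Diff[OF True]])
    finally show ?thesis .
  qed (simp add: conv_def)
qed

instantiation uf :: (comm_ring_1) comm_ring_1
begin
lift_definition zero_uf :: "'a uf" is "\<lambda>_. 0" by simp
lift_definition one_uf :: "'a uf" is "\<lambda>J. if J = {} then 1 else 0" by auto
lift_definition plus_uf :: "'a uf \<Rightarrow> 'a uf \<Rightarrow> 'a uf" is "\<lambda>f g J. f J + g J" by simp
lift_definition minus_uf :: "'a uf \<Rightarrow> 'a uf \<Rightarrow> 'a uf" is "\<lambda>f g J. f J - g J" by simp
lift_definition uminus_uf :: "'a uf \<Rightarrow> 'a uf" is "\<lambda>f J. - f J" by simp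
lift_definition times_uf :: "'a uf \<Rightarrow> 'a uf \<Rightarrow> 'a uf" is conv by (simp add: conv_def)
instance
proof
  fix a b c :: "'a uf"
  show "a * b * c = a * (b * c)" by transfer (rule conv_assoc)
  show "a * b = b * a" by transfer (rule conv_comm)
  show "1 * a = a"
  proof transfer
    fix f :: "nat set \<Rightarrow> 'a" assume f: "\<forall>J. infinite J \<longrightarrow> f J = 0"
    show "conv (\<lambda>J. if J = {} then 1 else 0) f = f"
    proof (rule ext)
      fix J show "conv (\<lambda>J. if J = {} then 1 else 0) f J = f J"
      proof (cases "finite J")
        case True
        have "(\<Sum>A\<in>Pow J. (if A = {} then 1 else 0) * f (J - A)) = (\<Sum>A\<in>{{}}. f (J - A))"
          by (rule sum.mono_neutral_cong_right) (auto simp: True)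
        then show ?thesis using True by (simp add: conv_def)
      qed (simp add: conv_def f)
    qed
  qed
  show "(a + b) * c = a * c + b * c"
    by transfer (simp add: conv_def sum.distrib distrib_right fun_eq_iff)
  show "a + b + c = a + (b + c)" by transfer (simp add: add.assoc)
  show "a + b = b + a" by transfer (simp add: add.commute)
  show "0 + a = a" by transfer simp
  show "- a + a = 0" by transfer simp
  show "a - b = a + - b" by transfer simp
  show "(0::'a uf) \<noteq> 1" by transfer (simp add: fun_eq_iff exI[of _ "{}"])
qed
end

lemma ufc_zero[simp]: "ufc 0 J = 0" by transfer simp
lemma ufc_one: "ufc 1 J = (if J = {} then 1 else 0)" by transfer simp
lemma ufc_add[simp]: "ufc (f + g) J = ufc f J + ufc g J" by transfer simp
lemma ufc_diff[simp]: "ufc (f - g) J = ufc f J - ufc g J" by transfer simp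
lemma ufc_uminus[simp]: "ufc (- f) J = - ufc f J" by transfer simp
lemma ufc_mult: "ufc (f * g) J = (if finite J then (\<Sum>A\<in>Pow J. ufc f A * ufc g (J - A)) else 0)"
  by transfer (simp add: conv_def)
lemma ufc_sum: "ufc (sum F S) J = (\<Sum>x\<in>S. ufc (F x) J)"
  by (induction S rule: infinite_finite_induct) auto


lift_definition mono :: "nat set \<Rightarrow> 'a::zero \<Rightarrow> 'a uf" is
  "\<lambda>K c J. if J = K \<and> finite K then c else 0" by auto

lemma ufc_mono: "ufc (mono K c) J = (if J = K \<and> finite K then c else 0)"
  by transfer simp

lemma ufc_mono_mult:
  fixes c :: "'a::comm_ring_1"
  assumes "finite K" "finite J"
  shows "ufc (mono K c * f) J = (if K \<subseteq> J then c * ufc f (J - K) else 0)"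
proof -
  have "ufc (mono K c * f) J = (\<Sum>A\<in>Pow J. ufc (mono K c) A * ufc f (J - A))"
    using assms by (simp add: ufc_mult)
  also have "\<dots> = (\<Sum>A\<in>Pow J. if A = K then c * ufc f (J - A) else 0)"
    by (rule sum.cong) (auto simp: ufc_mono assms)
  also have "\<dots> = (if K \<subseteq> J then c * ufc f (J - K) else 0)"
    using assms by (simp add: sum.delta)
  finally show ?thesis .
qed

lemma ufc_one_empty[simp]: "ufc 1 {} = 1" by (simp add: ufc_one)
lemma ufc_one_ne: "J \<noteq> {} \<Longrightarrow> ufc 1 J = 0" by (simp add: ufc_one)

lemma supp_mult_zero:
  fixes V W :: "'a::comm_ring_1 uf"
  assumes "M \<noteq> {}" "\<And>J. ufc V J \<noteq> 0 \<Longrightarrow> M \<subseteq> J" "\<And>J. ufc W J \<noteq> 0 \<Longrightarrow> M \<subseteq> J"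
  shows "V * W = 0"
proof (rule uf_eqI)
  fix J :: "nat set" assume J: "finite J"
  have "ufc V A * ufc W (J - A) = 0" if "A \<subseteq> J" for A
  proof (cases "ufc V A = 0")
    case False
    then have "M \<subseteq> A" using assms(2) by blast
    then have "\<not> M \<subseteq> J - A" using assms(1) by blast
    then have "ufc W (J - A) = 0" using assms(3) by blast
    then show ?thesis by simp
  qed simp
  then show "ufc (V * W) J = ufc 0 J" using J by (simp add: ufc_mult)
qed

lemma mono_sq: "K \<noteq> {} \<Longrightarrow> mono K (c::'a::comm_ring_1) * mono K c = 0"
  by (rule supp_mult_zero[of K]) (auto simp: ufc_mono split: if_splits)

lemma npow_zero:
  fixes N :: "'a::comm_ring_1 uf"
  assumes N0: "ufc N {} = 0"
  shows "finite J \<Longrightarrow> card J < k \<Longrightarrow> ufc (N ^ k) J = 0"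
proof (induction k arbitrary: J)
  case 0 then show ?case by simp
next
  case (Suc k)
  have "ufc N A * ufc (N ^ k) (J - A) = 0" if "A \<subseteq> J" for A
  proof (cases "A = {}")
    case True then show ?thesis using N0 by simp
  next
    case False
    have "finite A" using that Suc.prems(1) by (rule finite_subset)
    have "card A \<le> card J" using card_mono[OF Suc.prems(1) that] .
    moreover have "card A > 0" using False \<open>finite A\<close> by (simp add: card_gt_0_iff)
    moreover have "card (J - A) = card J - card A" using card_Diff_subset[OF \<open>finite A\<close> that] .
    ultimately have "card (J - A) < card J" by arith
    then have "ufc (N ^ k) (J - A) = 0" using Suc.IH[of "J - A"] Suc.prems by simp
    then show ?thesis by simp
  qed
  then show ?case using Suc.prems by (simp add: ufc_mult)
qed

definition geo :: "'a::comm_ring_1 uf \<Rightarrow> nat \<Rightarrow> 'a uf" where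
  "geo N m = (\<Sum>k\<le>m. N ^ k)"

lemma geo_stable:
  fixes N :: "'a::comm_ring_1 uf"
  assumes "ufc N {} = 0" "finite J" "card J \<le> m"
  shows "ufc (geo N m) J = ufc (geo N (card J)) J"
proof -
  have "ufc (geo N m) J = (\<Sum>k\<le>m. ufc (N ^ k) J)" by (simp add: geo_def ufc_sum)
  also have "\<dots> = (\<Sum>k\<le>card J. ufc (N ^ k) J)"
    by (rule sum.mono_neutral_right) (auto simp: assms npow_zero)
  finally show ?thesis by (simp add: geo_def ufc_sum)
qed

lift_definition uinv :: "'a::comm_ring_1 uf \<Rightarrow> 'a uf" is
  "\<lambda>f J. if finite J then ufc (geo (1 - Abs_uf f) (card J)) J else 0" by simp

lemma ufc_uinv: "finite J \<Longrightarrow> ufc (uinv f) J = ufc (geo (1 - f) (card J)) J"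
  by (simp add: uinv.rep_eq ufc.rep_eq Rep_uf_inverse)

lemma geo_mult: "(1 - N) * geo N m = 1 - N ^ Suc m"
proof (induction m)
  case 0 then show ?case by (simp add: geo_def)
next
  case (Suc m)
  have "geo N (Suc m) = geo N m + N ^ Suc m" by (simp add: geo_def)
  then have "(1 - N) * geo N (Suc m) = (1 - N) * geo N m + (1 - N) * N ^ Suc m"
    by (simp add: distrib_left)
  also have "\<dots> = 1 - N ^ Suc (Suc m)" using Suc.IH by (simp add: algebra_simps)
  finally show ?case .
qed

lemma uinv_right:
  fixes f :: "'a::comm_ring_1 uf"
  assumes f0: "ufc f {} = 1"
  shows "f * uinv f = 1"
proof (rule uf_eqI)
  fix J :: "nat set" assume J: "finite J"
  let ?N = "1 - f"
  have N0: "ufc ?N {} = 0" using f0 by simp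
  have "ufc (f * uinv f) J = (\<Sum>A\<in>Pow J. ufc f A * ufc (uinv f) (J - A))"
    using J by (simp add: ufc_mult)
  also have "\<dots> = (\<Sum>A\<in>Pow J. ufc f A * ufc (geo ?N (card J)) (J - A))"
  proof (rule sum.cong[OF refl])
    fix A assume "A \<in> Pow J"
    then have "card (J - A) \<le> card J" using J by (simp add: card_mono)
    then have "ufc (geo ?N (card J)) (J - A) = ufc (geo ?N (card (J - A))) (J - A)"
      using J N0 geo_stable[of ?N "J - A" "card J"] by simp
    then show "ufc f A * ufc (uinv f) (J - A) = ufc f A * ufc (geo ?N (card J)) (J - A)"
      using J by (simp add: ufc_uinv)
  qed
  also have "\<dots> = ufc (f * geo ?N (card J)) J" using J by (simp add: ufc_mult)
  also have "f * geo ?N (card J) = 1 - ?N ^ Suc (card J)"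
    using geo_mult[of ?N "card J"] by simp
  also have "ufc \<dots> J = ufc 1 J" using npow_zero[OF N0 J, of "Suc (card J)"] by simp
  finally show "ufc (f * uinv f) J = ufc 1 J" .
qed

lemma ufc_mult_local:
  fixes V V' W :: "'a::comm_ring_1 uf"
  assumes "finite A" "\<And>J. J \<subseteq> A \<Longrightarrow> ufc V J = ufc V' J"
  shows "ufc (V * W) A = ufc (V' * W) A"
  using assms by (simp add: ufc_mult)

section \<open>Orders of power series\<close>

definition ordge :: "nat \<Rightarrow> real fps \<Rightarrow> bool" where
  "ordge r p \<longleftrightarrow> (\<forall>i<r. p $ i = 0)"

lemma ordge_0[simp]: "ordge 0 p" by (simp add: ordge_def)
lemma ordge_zero[simp]: "ordge r 0" by (simp add: ordge_def)
lemma ordge_mono: "ordge r p \<Longrightarrow> s \<le> r \<Longrightarrow> ordge s p" by (simp add: ordge_def)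
lemma ordge_add: "ordge r p \<Longrightarrow> ordge r q \<Longrightarrow> ordge r (p + q)" by (simp add: ordge_def)
lemma ordge_diff: "ordge r p \<Longrightarrow> ordge r q \<Longrightarrow> ordge r (p - q)" by (simp add: ordge_def)
lemma ordge_uminus: "ordge r p \<Longrightarrow> ordge r (- p)" by (simp add: ordge_def)
lemma ordge_sum: "(\<And>x. x \<in> S \<Longrightarrow> ordge r (f x)) \<Longrightarrow> ordge r (sum f S)"
  by (induction S rule: infinite_finite_induct) (auto intro: ordge_add)

lemma ordge_mult: "ordge r p \<Longrightarrow> ordge s q \<Longrightarrow> ordge (r + s) (p * q)"
  unfolding ordge_def
proof (intro allI impI)
  fix i assume p: "\<forall>i<r. p $ i = 0" and q: "\<forall>i<s. q $ i = 0" and i: "i < r + s"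
  have "\<forall>j\<in>{0..i}. p $ j * q $ (i - j) = 0"
  proof
    fix j assume "j \<in> {0..i}"
    then show "p $ j * q $ (i - j) = 0" using p q i by (cases "j < r") auto
  qed
  then show "(p * q) $ i = 0" unfolding fps_mult_nth by (rule sum.neutral)
qed

lemma ordge_mult': "ordge r p \<Longrightarrow> ordge s q \<Longrightarrow> t \<le> r + s \<Longrightarrow> ordge t (p * q)"
  using ordge_mult ordge_mono by blast

lemma prod_nth0: "(prod f S :: real fps) $ 0 = (\<Prod>x\<in>S. f x $ 0)"
  by (induction S rule: infinite_finite_induct) auto

lemma ordge_prod_one:
  assumes "\<And>x. x \<in> S \<Longrightarrow> ordge r (f x - 1)"
  shows "ordge r (prod f S - 1)"
  using assms
proof (induction S rule: infinite_finite_induct)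
  case (insert x F)
  have e: "prod f (insert x F) - 1 = (f x - 1) * prod f F + (prod f F - 1)"
    using insert by (simp add: algebra_simps)
  have a: "ordge r ((f x - 1) * prod f F)"
    by (rule ordge_mult'[of r _ 0]) (use insert in auto)
  have b: "ordge r (prod f F - 1)" using insert by auto
  show ?case unfolding e by (rule ordge_add[OF a b])
qed simp_all

definition adm :: "(nat set \<Rightarrow> real fps) \<Rightarrow> bool" where
  "adm h \<longleftrightarrow> h {} = 1 \<and> (\<forall>K. h K $ 0 = 1) \<and> (\<forall>K. finite K \<longrightarrow> ordge (card K - 1) (h K - 1))"

lift_definition Yh :: "(nat set \<Rightarrow> real fps) \<Rightarrow> real fps uf" is
  "\<lambda>h J. if finite J then (\<Prod>K\<in>Pow J. h K) else 0" by auto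

lemma ufc_Yh: "finite J \<Longrightarrow> ufc (Yh h) J = (\<Prod>K\<in>Pow J. h K)"
  by transfer simp

lemma Yh_empty: "adm h \<Longrightarrow> ufc (Yh h) {} = 1"
  by (simp add: ufc_Yh adm_def)

lift_definition dM :: "nat set \<Rightarrow> 'a::zero uf \<Rightarrow> 'a uf" is
  "\<lambda>M V I. if finite I \<and> I \<inter> M = {} then V (I \<union> M) else 0" by auto

lemma ufc_dM: "ufc (dM M V) I = (if finite I \<and> I \<inter> M = {} then ufc V (I \<union> M) else 0)"
  by transfer simp

definition Xh :: "(nat set \<Rightarrow> real fps) \<Rightarrow> nat set \<Rightarrow> real fps uf" where
  "Xh h M = dM M (Yh h) * uinv (Yh h)"

lemma Yh_update:
  assumes "adm h" "finite M" "M \<noteq> {}"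
  shows "Yh (h(M := h M * g)) = Yh h * (1 + mono M (g - 1) * Xh h M)"
proof -
  have Y0: "ufc (Yh h) {} = 1" using assms by (simp add: Yh_empty)
  have "Yh (h(M := h M * g)) = Yh h + mono M (g - 1) * dM M (Yh h)"
  proof (rule uf_eqI)
    fix J :: "nat set" assume J: "finite J"
    show "ufc (Yh (h(M := h M * g))) J = ufc (Yh h + mono M (g - 1) * dM M (Yh h)) J"
    proof (cases "M \<subseteq> J")
      case True
      have MJ: "M \<in> Pow J" using True by simp
      have "(\<Prod>K\<in>Pow J. (h(M := h M * g)) K) = (h M * g) * (\<Prod>K\<in>Pow J - {M}. h K)"
        using MJ J by (simp add: prod.remove[of "Pow J" M])
      also have "\<dots> = (\<Prod>K\<in>Pow J. h K) * g"
        using MJ J by (simp add: prod.remove[of "Pow J" M] algebra_simps)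
      finally have e: "(\<Prod>K\<in>Pow J. (h(M := h M * g)) K) = (\<Prod>K\<in>Pow J. h K) * g" .
      have JM: "J - M \<union> M = J" "(J - M) \<inter> M = {}" using True by blast+
      have "ufc (Yh h + mono M (g - 1) * dM M (Yh h)) J = ufc (Yh h) J + (g - 1) * ufc (dM M (Yh h)) (J - M)"
        using J True assms(2) by (simp add: ufc_mono_mult)
      also have "\<dots> = (\<Prod>K\<in>Pow J. h K) + (g - 1) * (\<Prod>K\<in>Pow J. h K)"
        using J JM by (simp add: ufc_dM ufc_Yh)
      also have "\<dots> = (\<Prod>K\<in>Pow J. h K) * g" by (simp add: algebra_simps)
      finally show ?thesis using J e by (simp add: ufc_Yh)
    next
      case False
      have "(\<Prod>K\<in>Pow J. (h(M := h M * g)) K) = (\<Prod>K\<in>Pow J. h K)"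
        by (rule prod.cong) (use False in auto)
      then show ?thesis using J False assms(2)
        by (simp add: ufc_Yh ufc_mono_mult)
    qed
  qed
  also have "\<dots> = Yh h * (1 + mono M (g - 1) * Xh h M)"
  proof -
    have "Yh h * (1 + mono M (g - 1) * Xh h M) =
        Yh h + mono M (g - 1) * dM M (Yh h) * (Yh h * uinv (Yh h))"
      by (simp add: Xh_def algebra_simps)
    then show ?thesis using uinv_right[OF Y0] by simp
  qed
  finally show ?thesis .
qed


definition OneO :: "nat set \<Rightarrow> real fps uf \<Rightarrow> bool" where
  "OneO A V \<longleftrightarrow> ufc V {} = 1 \<and> (\<forall>J. J \<subseteq> A \<longrightarrow> J \<noteq> {} \<longrightarrow> ordge (card J) (ufc V J))"

lemma OneO_all: "OneO A V \<Longrightarrow> J \<subseteq> A \<Longrightarrow> ordge (card J) (ufc V J)"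
  unfolding OneO_def by (cases "J = {}") auto

lemma OneO_one: "OneO A 1"
  by (simp add: OneO_def ufc_one)

lemma OneO_mult:
  assumes A: "finite A" and V: "OneO A V" and W: "OneO A W"
  shows "OneO A (V * W)"
  unfolding OneO_def
proof (intro conjI allI impI)
  show "ufc (V * W) {} = 1" using V W by (simp add: ufc_mult OneO_def)
next
  fix J assume J: "J \<subseteq> A" "J \<noteq> {}"
  have fJ: "finite J" using finite_subset[OF J(1) A] .
  have "ordge (card J) (ufc V B * ufc W (J - B))" if "B \<in> Pow J" for B
  proof -
    have "card J = card B + card (J - B)"
      using that fJ by (metis PowD card_Diff_subset card_mono diff_add_inverse finite_subset le_add_diff_inverse)
    moreover have "ordge (card B) (ufc V B)" using OneO_all[OF V] that J by blast
    moreover have "ordge (card (J - B)) (ufc W (J - B))" using OneO_all[OF W] J by blast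
    ultimately show ?thesis by (metis ordge_mult)
  qed
  then have "ordge (card J) (\<Sum>B\<in>Pow J. ufc V B * ufc W (J - B))"
    by (rule ordge_sum)
  then show "ordge (card J) (ufc (V * W) J)"
    using fJ by (simp add: ufc_mult)
qed

definition hS :: "(nat set \<Rightarrow> real fps) \<Rightarrow> (nat set \<Rightarrow> real fps) \<Rightarrow> nat set set \<Rightarrow> nat set \<Rightarrow> real fps" where
  "hS h g S = (\<lambda>B. if B \<in> S then h B * g B else h B)"

definition goodg :: "(nat set \<Rightarrow> real fps) \<Rightarrow> nat set set \<Rightarrow> bool" where
  "goodg g S \<longleftrightarrow> (\<forall>B\<in>S. finite B \<and> B \<noteq> {} \<and> g B $ 0 = 1 \<and> ordge (card B) (g B - 1))"

lemma adm_hS: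
  assumes "adm h" "goodg g S"
  shows "adm (hS h g S)"
  unfolding adm_def
proof (intro conjI allI impI)
  show "hS h g S {} = 1" using assms by (auto simp: hS_def adm_def goodg_def)
  fix K
  show "hS h g S K $ 0 = 1" using assms by (auto simp: hS_def adm_def goodg_def)
  assume K: "finite K"
  show "ordge (card K - 1) (hS h g S K - 1)"
  proof (cases "K \<in> S")
    case True
    have e: "h K * g K - 1 = (h K - 1) * g K + (g K - 1)" by (simp add: algebra_simps)
    have a: "ordge (card K - 1) ((h K - 1) * g K)"
      by (rule ordge_mult'[of "card K - 1" _ 0]) (use assms K in \<open>auto simp: adm_def\<close>)
    have b: "ordge (card K - 1) (g K - 1)"
      using assms True by (auto simp: goodg_def intro: ordge_mono)
    have "hS h g S K - 1 = (h K - 1) * g K + (g K - 1)" using True by (simp add: hS_def e)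
    then show ?thesis using ordge_add[OF a b] by (simp only:)
  next
    case False then show ?thesis using assms K by (simp add: hS_def adm_def)
  qed
qed

definition Pprop :: "nat \<Rightarrow> bool" where
  "Pprop s \<longleftrightarrow> (\<forall>h M A. adm h \<longrightarrow> finite M \<longrightarrow> M \<noteq> {} \<longrightarrow> finite A \<longrightarrow> A \<inter> M = {} \<longrightarrow>
     card A = s \<longrightarrow> ordge s (ufc (Xh h M) A))"

lemma PL:
  assumes IH: "\<And>s. s < card A \<Longrightarrow> Pprop s"
    and h: "adm h" and A: "finite A" and S: "S \<subseteq> Pow A - {{}}" and g: "goodg g S"
  shows "OneO A (Yh (hS h g S) * uinv (Yh h))"
proof -
  have "finite S" using S A by (meson finite_Diff finite_Pow_iff finite_subset)
  then show ?thesis using S g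
  proof (induction S rule: finite_induct)
    case empty
    have "hS h g {} = h" by (simp add: hS_def fun_eq_iff)
    then show ?case using uinv_right[OF Yh_empty[OF h]] by (simp add: OneO_one)
  next
    case (insert M S)
    have gS: "goodg g S" using insert.prems by (simp add: goodg_def)
    let ?h1 = "hS h g S"
    have h1: "adm ?h1" using adm_hS[OF h gS] .
    have M: "finite M" "M \<noteq> {}" "M \<subseteq> A" using insert.prems by (auto simp: goodg_def)
    have eq: "hS h g (insert M S) = ?h1(M := ?h1 M * g M)"
      using insert.hyps by (auto simp: hS_def fun_eq_iff)
    have Y: "Yh (hS h g (insert M S)) = Yh ?h1 * (1 + mono M (g M - 1) * Xh ?h1 M)"
      unfolding eq by (rule Yh_update[OF h1 M(1,2)])
    have o1: "OneO A (Yh ?h1 * uinv (Yh h))" using insert.IH insert.prems gS by auto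
    have o2: "OneO A (1 + mono M (g M - 1) * Xh ?h1 M)"
      unfolding OneO_def
    proof (intro conjI allI impI)
      show "ufc (1 + mono M (g M - 1) * Xh ?h1 M) {} = 1"
        using M by (simp add: ufc_mono_mult)
      fix J assume J: "J \<subseteq> A" "J \<noteq> {}"
      have fJ: "finite J" using finite_subset[OF J(1) A] .
      show "ordge (card J) (ufc (1 + mono M (g M - 1) * Xh ?h1 M) J)"
      proof (cases "M \<subseteq> J")
        case True
        have cJ: "card J = card M + card (J - M)"
          using True fJ M by (metis card_Diff_subset card_mono le_add_diff_inverse)
        have a: "ordge (card M) (g M - 1)" using insert.prems by (simp add: goodg_def)
        have b: "ordge (card (J - M)) (ufc (Xh ?h1 M) (J - M))"
        proof (cases "J - M = {}")
          case False
          have "card (J - M) < card J"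
            using cJ M card_gt_0_iff by fastforce
          moreover have "card J \<le> card A" using J A card_mono by blast
          ultimately have "Pprop (card (J - M))" using IH by simp
          then show ?thesis unfolding Pprop_def using h1 M fJ by blast
        next
          case True
          then show ?thesis by (simp only: True card.empty ordge_0)
        qed
        show ?thesis using True fJ M J cJ
          by (simp add: ufc_mono_mult ufc_one ordge_mult[OF a b])
      next
        case False
        then show ?thesis using fJ M J by (simp add: ufc_mono_mult ufc_one)
      qed
    qed
    show ?case unfolding Y mult.assoc[symmetric]
      using OneO_mult[OF A o1 o2] by (simp add: algebra_simps)
  qed
qed


lemma prod_Pow_union:
  assumes "I \<inter> M = {}" "finite I" "finite M"
  shows "(\<Prod>K\<in>Pow (I \<union> M). h K) = (\<Prod>B\<in>Pow I. \<Prod>C\<in>Pow M. h (B \<union> C))"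
proof -
  have img: "Pow (I \<union> M) = (\<lambda>(B,C). B \<union> C) ` (Pow I \<times> Pow M)"
  proof
    show "Pow (I \<union> M) \<subseteq> (\<lambda>(B,C). B \<union> C) ` (Pow I \<times> Pow M)"
    proof
      fix K assume "K \<in> Pow (I \<union> M)"
      then have "K = (K \<inter> I) \<union> (K \<inter> M)" "(K \<inter> I, K \<inter> M) \<in> Pow I \<times> Pow M" by auto
      then show "K \<in> (\<lambda>(B,C). B \<union> C) ` (Pow I \<times> Pow M)" by (metis (no_types, lifting) case_prod_conv image_eqI)
    qed
  qed auto
  have inj: "inj_on (\<lambda>(B,C). B \<union> C) (Pow I \<times> Pow M)"
  proof (rule inj_onI)
    fix p q assume p: "p \<in> Pow I \<times> Pow M" and q: "q \<in> Pow I \<times> Pow M"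
      and e: "(\<lambda>(B,C). B \<union> C) p = (\<lambda>(B,C). B \<union> C) q"
    obtain B C where pp: "p = (B,C)" "B \<subseteq> I" "C \<subseteq> M" using p by auto
    obtain B' C' where qq: "q = (B',C')" "B' \<subseteq> I" "C' \<subseteq> M" using q by auto
    have "B \<union> C = B' \<union> C'" using e pp qq by simp
    then have "B = B'" "C = C'" using pp qq assms(1) by blast+
    then show "p = q" using pp qq by simp
  qed
  have "(\<Prod>K\<in>Pow (I \<union> M). h K) = (\<Prod>p\<in>Pow I \<times> Pow M. h ((\<lambda>(B,C). B \<union> C) p))"
    unfolding img prod.reindex[OF inj] by (simp add: comp_def)
  also have "\<dots> = (\<Prod>B\<in>Pow I. \<Prod>C\<in>Pow M. h (B \<union> C))"
    by (simp add: prod.cartesian_product split_def)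
  finally show ?thesis .
qed

lemma P_all: "Pprop s"
proof (induction s rule: less_induct)
  case (less s)
  show ?case unfolding Pprop_def
  proof (intro allI impI)
    fix h and M A :: "nat set" assume h: "adm h" and M: "finite M" "M \<noteq> {}" and A: "finite A"
      and AM: "A \<inter> M = {}" and cA: "card A = s"
    show "ordge s (ufc (Xh h M) A)"
    proof (cases "A = {}")
      case True then show ?thesis using cA by simp
    next
      case False
      define g where "g B = (\<Prod>C\<in>Pow M - {{}}. h (B \<union> C))" for B
      define S where "S = Pow A - {{}}"
      have gg: "goodg g S" unfolding goodg_def
      proof
        fix B assume B: "B \<in> S"
        have fB: "finite B" using B A S_def finite_subset by auto
        have "g B $ 0 = 1" using h by (simp add: g_def prod_nth0 adm_def)
        moreover have "ordge (card B) (g B - 1)" unfolding g_def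
        proof (rule ordge_prod_one)
          fix C assume C: "C \<in> Pow M - {{}}"
          have fC: "finite C" using C M finite_subset by auto
          have "B \<inter> C = {}" using B C AM S_def by auto
          then have "card (B \<union> C) = card B + card C" using fB fC card_Un_disjoint by blast
          moreover have "card C > 0" using C fC by (simp add: card_gt_0_iff)
          ultimately have "card B \<le> card (B \<union> C) - 1" by simp
          moreover have "ordge (card (B \<union> C) - 1) (h (B \<union> C) - 1)"
            using h fB fC by (simp add: adm_def)
          ultimately show "ordge (card B) (h (B \<union> C) - 1)" by (rule ordge_mono[rotated])
        qed
        ultimately show "finite B \<and> B \<noteq> {} \<and> g B $ 0 = 1 \<and> ordge (card B) (g B - 1)"
          using fB B S_def by simp
      qed
      have IH: "\<And>s'. s' < card A \<Longrightarrow> Pprop s'" using less cA by simp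
      have PLr: "OneO A (Yh (hS h g S) * uinv (Yh h))"
        by (rule PL) (use IH h A gg in \<open>auto simp: S_def\<close>)
      have key: "ufc (dM M (Yh h)) I = ufc (Yh h) M * ufc (Yh (hS h g S)) I" if I: "I \<subseteq> A" for I
      proof -
        have fI: "finite I" using I A finite_subset by blast
        have IM: "I \<inter> M = {}" using I AM by blast
        have "ufc (dM M (Yh h)) I = (\<Prod>K\<in>Pow (I \<union> M). h K)"
          using fI IM M by (simp add: ufc_dM ufc_Yh)
        also have "\<dots> = (\<Prod>B\<in>Pow I. \<Prod>C\<in>Pow M. h (B \<union> C))"
          by (rule prod_Pow_union[OF IM fI M(1)])
        also have "\<dots> = (\<Prod>C\<in>Pow M. h C) * (\<Prod>B\<in>Pow I - {{}}. \<Prod>C\<in>Pow M. h (B \<union> C))"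
          using fI by (simp add: prod.remove[of "Pow I" "{}"])
        also have "(\<Prod>B\<in>Pow I - {{}}. \<Prod>C\<in>Pow M. h (B \<union> C)) = (\<Prod>B\<in>Pow I - {{}}. h B * g B)"
        proof (rule prod.cong[OF refl])
          fix B assume "B \<in> Pow I - {{}}"
          show "(\<Prod>C\<in>Pow M. h (B \<union> C)) = h B * g B"
            using M by (simp add: prod.remove[of "Pow M" "{}"] g_def)
        qed
        also have "(\<Prod>B\<in>Pow I - {{}}. h B * g B) = (\<Prod>B\<in>Pow I. hS h g S B)"
        proof -
          have "(\<Prod>B\<in>Pow I. hS h g S B) = hS h g S {} * (\<Prod>B\<in>Pow I - {{}}. hS h g S B)"
            using fI by (simp add: prod.remove[of "Pow I" "{}"])
          also have "hS h g S {} = 1" using h by (simp add: hS_def S_def adm_def)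
          also have "(\<Prod>B\<in>Pow I - {{}}. hS h g S B) = (\<Prod>B\<in>Pow I - {{}}. h B * g B)"
            by (rule prod.cong[OF refl]) (use I in \<open>auto simp: hS_def S_def\<close>)
          finally show ?thesis by simp
        qed
        finally show ?thesis using fI M by (simp add: ufc_Yh)
      qed
      have "ufc (Xh h M) A = (\<Sum>B\<in>Pow A. ufc (dM M (Yh h)) B * ufc (uinv (Yh h)) (A - B))"
        using A by (simp add: Xh_def ufc_mult)
      also have "\<dots> = (\<Sum>B\<in>Pow A. ufc (Yh h) M * (ufc (Yh (hS h g S)) B * ufc (uinv (Yh h)) (A - B)))"
        by (rule sum.cong[OF refl]) (simp add: key)
      also have "\<dots> = ufc (Yh h) M * ufc (Yh (hS h g S) * uinv (Yh h)) A"
        using A by (simp add: ufc_mult sum_distrib_left)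
      finally have e: "ufc (Xh h M) A = ufc (Yh h) M * ufc (Yh (hS h g S) * uinv (Yh h)) A" .
      have "ordge (card A) (ufc (Yh h) M * ufc (Yh (hS h g S) * uinv (Yh h)) A)"
        by (rule ordge_mult'[of 0 _ "card A"]) (use OneO_all[OF PLr] in auto)
      then show ?thesis using e cA by simp
    qed
  qed
qed

lemma Xh_ord:
  fixes M A :: "nat set"
  assumes "adm h" "finite M" "M \<noteq> {}" "finite A" "A \<inter> M = {}"
  shows "ordge (card A) (ufc (Xh h M) A)"
  using P_all[of "card A"] assms unfolding Pprop_def by blast


definition fac :: "nat set \<Rightarrow> real \<Rightarrow> real fps uf" where
  "fac K s = 1 + mono K (fps_const s * fps_X ^ (card K - 1))"

definition facs :: "(nat set \<times> real) list \<Rightarrow> real fps uf" where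
  "facs L = prod_list (map (\<lambda>(K,s). fac K s) L)"

definition okL :: "(nat set \<times> real) list \<Rightarrow> bool" where
  "okL L \<longleftrightarrow> (\<forall>(K,s)\<in>set L. finite K \<and> K \<noteq> {})"

definition agree :: "nat set \<Rightarrow> real fps uf \<Rightarrow> real fps uf \<Rightarrow> bool" where
  "agree U V W \<longleftrightarrow> (\<forall>J. J \<subseteq> U \<longrightarrow> ufc V J = ufc W J)"

definition Good :: "nat set \<Rightarrow> real fps uf \<Rightarrow> bool" where
  "Good U V \<longleftrightarrow> (\<exists>L R. okL L \<and> OneO U R \<and> agree U V (facs L * R))"

lemma agree_mult: "finite U \<Longrightarrow> agree U V V' \<Longrightarrow> agree U (V * W) (V' * W)"
  unfolding agree_def by (metis (no_types, lifting) finite_subset order_trans PowD ufc_mult sum.cong)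

lemma agree_trans: "agree U V V' \<Longrightarrow> agree U V' V'' \<Longrightarrow> agree U V V''"
  unfolding agree_def by simp

lemma agree_refl: "agree U V V" unfolding agree_def by simp
lemma agree_sym: "agree U V W \<Longrightarrow> agree U W V" unfolding agree_def by simp

lemma Good_agree: "Good U V \<Longrightarrow> agree U V V' \<Longrightarrow> Good U V'"
  unfolding Good_def agree_def by metis

lemma facs_append: "facs (L @ L') = facs L * facs L'"
  by (simp add: facs_def)

lemma okL_append: "okL (L @ L') \<longleftrightarrow> okL L \<and> okL L'"
  by (auto simp: okL_def)

lemma Good_mult:
  assumes U: "finite U" and G: "Good U V" and L': "okL L'" and R': "OneO U R'"
  shows "Good U (V * (facs L' * R'))"
proof -
  obtain L R where L: "okL L" and R: "OneO U R" and a: "agree U V (facs L * R)"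
    using G unfolding Good_def by blast
  have "agree U (V * (facs L' * R')) (facs L * R * (facs L' * R'))"
    using agree_mult[OF U a] .
  moreover have "facs L * R * (facs L' * R') = facs (L @ L') * (R * R')"
    by (simp add: facs_append algebra_simps)
  moreover have "OneO U (R * R')" by (rule OneO_mult[OF U R R'])
  moreover have "okL (L @ L')" using L L' by (simp add: okL_append)
  ultimately show ?thesis unfolding Good_def by metis
qed

lemma prod_list_annih:
  fixes xs :: "'a::comm_ring_1 list"
  assumes "\<And>x y. x \<in> set xs \<Longrightarrow> y \<in> set xs \<Longrightarrow> x * y = 0"
  shows "prod_list (map (\<lambda>x. 1 + x) xs) = 1 + sum_list xs"
  using assms
proof (induction xs)
  case (Cons a xs)
  have m: "map ((*) a) xs = map (\<lambda>_. 0) xs"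
    using Cons.prems by (intro map_cong) auto
  have "a * sum_list xs = sum_list (map ((*) a) xs)" by (simp add: sum_list_const_mult)
  also have "\<dots> = 0" unfolding m by (induction xs) auto
  finally have "a * sum_list xs = 0" .
  then show ?case using Cons by (simp add: algebra_simps)
qed simp


lemma edge_factor:
  assumes U: "finite U" and h: "adm h" and M: "finite M" "M \<noteq> {}" "M \<subseteq> U"
    and rho: "ordge (card M - 1) \<rho>"
  shows "\<exists>L r. okL L \<and> OneO U r \<and> 1 + mono M \<rho> * Xh h M = facs L * r"
proof -
  define w where "w = mono M \<rho> * Xh h M"
  define Jset where "Jset = {J. M \<subseteq> J \<and> J \<subseteq> U}"
  define c where "c J = ufc w J $ (card J - 1)" for J
  define x where "x J = mono J (fps_const (c J) * fps_X ^ (card J - 1))" for J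
  define p where "p = (\<Sum>J\<in>Jset. x J)"
  define r where "r = w - p"
  have fJs: "finite Jset" unfolding Jset_def using U by (simp add: finite_subset[of _ "Pow U"] subset_eq)
  obtain Ls where Ls: "set Ls = Jset" "distinct Ls" using finite_distinct_list[OF fJs] by blast
  define L where "L = map (\<lambda>J. (J, c J)) Ls"
  have okL: "okL L"
    unfolding okL_def L_def using Ls M U by (auto simp: Jset_def intro: finite_subset)
  have suppw: "M \<subseteq> K" if "ufc w K \<noteq> 0" for K
  proof (cases "finite K")
    case True then show ?thesis using that M by (simp add: w_def ufc_mono_mult split: if_splits)
  qed (use that in \<open>simp add: ufc_inf\<close>)
  have ufc_x: "ufc (x J) K = (if K = J \<and> finite J then fps_const (c J) * fps_X ^ (card J - 1) else 0)" for J K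
    by (simp add: x_def ufc_mono)
  have ufc_p: "ufc p K = (if K \<in> Jset then fps_const (c K) * fps_X ^ (card K - 1) else 0)" for K
  proof -
    have "ufc p K = (\<Sum>J\<in>Jset. ufc (x J) K)" by (simp add: p_def ufc_sum)
    also have "\<dots> = (\<Sum>J\<in>Jset. if J = K then fps_const (c K) * fps_X ^ (card K - 1) else 0)"
      by (rule sum.cong[OF refl]) (auto simp: ufc_x Jset_def intro: finite_subset[OF _ U])
    also have "\<dots> = (if K \<in> Jset then fps_const (c K) * fps_X ^ (card K - 1) else 0)"
      using fJs by (simp add: sum.delta')
    finally show ?thesis .
  qed
  have suppp: "M \<subseteq> K" if "ufc p K \<noteq> 0" for K
    using that by (simp add: ufc_p Jset_def split: if_splits)
  have suppr: "M \<subseteq> K" if "ufc r K \<noteq> 0" for K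
    using that suppw suppp by (force simp: r_def)
  have pr: "p * r = 0" by (rule supp_mult_zero[OF M(2) suppp suppr])
  have facsL: "facs L = 1 + p"
  proof -
    have "facs L = prod_list (map (\<lambda>y. 1 + y) (map x Ls))"
      by (simp add: facs_def L_def fac_def x_def comp_def)
    also have "\<dots> = 1 + sum_list (map x Ls)"
    proof (rule prod_list_annih)
      fix y z assume "y \<in> set (map x Ls)" "z \<in> set (map x Ls)"
      then obtain J J' where y: "y = x J" "J \<in> Jset" and z: "z = x J'" "J' \<in> Jset"
        using Ls by auto
      show "y * z = 0"
      proof (rule supp_mult_zero[OF M(2)])
        fix K assume "ufc y K \<noteq> 0" then show "M \<subseteq> K"
          using y by (simp add: ufc_x Jset_def split: if_splits)
      next
        fix K assume "ufc z K \<noteq> 0" then show "M \<subseteq> K"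
          using z by (simp add: ufc_x Jset_def split: if_splits)
      qed
    qed
    also have "sum_list (map x Ls) = p"
      using Ls by (simp add: sum_list_distinct_conv_sum_set p_def)
    finally show ?thesis .
  qed
  have eq: "1 + mono M \<rho> * Xh h M = facs L * (1 + r)"
    unfolding facsL using pr by (simp add: r_def w_def algebra_simps)
  have oneo: "OneO U (1 + r)"
    unfolding OneO_def
  proof (intro conjI allI impI)
    have "ufc r {} = 0" using suppr M(2) by blast
    then show "ufc (1 + r) {} = 1" by simp
    fix J assume J: "J \<subseteq> U" "J \<noteq> {}"
    have fJ: "finite J" using finite_subset[OF J(1) U] .
    show "ordge (card J) (ufc (1 + r) J)"
    proof (cases "M \<subseteq> J")
      case False
      then have "ufc r J = 0" using suppr by blast
      then show ?thesis using J by (simp add: ufc_one)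
    next
      case True
      have JJ: "J \<in> Jset" using True J by (simp add: Jset_def)
      have cJ: "card J = card M + card (J - M)"
        using True fJ M by (metis card_Diff_subset card_mono le_add_diff_inverse)
      have cM: "card M > 0" using M by (simp add: card_gt_0_iff)
      have ow: "ordge (card J - 1) (ufc w J)"
      proof -
        have "ufc w J = \<rho> * ufc (Xh h M) (J - M)" using True fJ M by (simp add: w_def ufc_mono_mult)
        moreover have "ordge (card (J - M)) (ufc (Xh h M) (J - M))"
          by (rule Xh_ord[OF h M(1,2)]) (use fJ in auto)
        ultimately show ?thesis using ordge_mult[OF rho] cJ cM
          by (metis Nat.add_diff_assoc2 One_nat_def Suc_leI)
      qed
      have "ufc r J = ufc w J - fps_const (c J) * fps_X ^ (card J - 1)"
        using JJ by (simp add: r_def ufc_p)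
      moreover have "ordge (card J) (ufc w J - fps_const (c J) * fps_X ^ (card J - 1))"
        unfolding ordge_def
      proof (intro allI impI)
        fix i assume i: "i < card J"
        show "(ufc w J - fps_const (c J) * fps_X ^ (card J - 1)) $ i = 0"
        proof (cases "i = card J - 1")
          case True then show ?thesis by (simp add: c_def)
        next
          case False
          then have "i < card J - 1" using i by simp
          then show ?thesis using ow False by (simp add: ordge_def)
        qed
      qed
      ultimately show ?thesis using J by (simp add: ufc_one)
    qed
  qed
  show ?thesis using okL oneo eq by blast
qed


lemma ufc_prod_singles:
  assumes "distinct Us" "finite J"
  shows "ufc (prod_list (map (\<lambda>i. 1 + mono {i} (1::real fps)) Us)) J = (if J \<subseteq> set Us then 1 else 0)"
  using assms
proof (induction Us arbitrary: J)
  case Nil then show ?case by (simp add: ufc_one)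
next
  case (Cons a Us)
  let ?P = "prod_list (map (\<lambda>i. 1 + mono {i} (1::real fps)) Us)"
  have "ufc ((1 + mono {a} 1) * ?P) J = ufc ?P J + (if a \<in> J then ufc ?P (J - {a}) else 0)"
    using Cons.prems by (simp add: distrib_right ufc_mono_mult)
  also have "\<dots> = (if J \<subseteq> set (a # Us) then 1 else 0)"
    using Cons.prems Cons.IH by auto
  finally show ?case by simp
qed

lemma Good_ones:
  assumes U: "finite U"
  shows "Good U (Yh (\<lambda>_. 1))"
proof -
  obtain Us where Us: "set Us = U" "distinct Us" using finite_distinct_list[OF U] by blast
  define L where "L = map (\<lambda>i. ({i}, 1::real)) Us"
  have okL: "okL L" by (simp add: okL_def L_def)
  have fL: "facs L = prod_list (map (\<lambda>i. 1 + mono {i} (1::real fps)) Us)"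
    by (simp add: facs_def L_def fac_def comp_def)
  have "agree U (Yh (\<lambda>_. 1)) (facs L * 1)"
    unfolding agree_def
  proof (intro allI impI)
    fix J assume J: "J \<subseteq> U"
    have fJ: "finite J" using finite_subset[OF J U] .
    show "ufc (Yh (\<lambda>_. 1)) J = ufc (facs L * 1) J"
      using fJ J Us by (simp add: ufc_Yh fL ufc_prod_singles)
  qed
  then show ?thesis unfolding Good_def using okL OneO_one by blast
qed

definition hF :: "(nat set \<Rightarrow> real fps) \<Rightarrow> nat set set \<Rightarrow> nat set \<Rightarrow> real fps" where
  "hF h S = (\<lambda>B. if B \<in> S then h B else 1)"

lemma adm_hF: "adm h \<Longrightarrow> {} \<notin> S \<Longrightarrow> adm (hF h S)"
  by (auto simp: adm_def hF_def)

lemma Good_family: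
  assumes h: "adm h" and U: "finite U"
  shows "Good U (Yh h)"
proof -
  have "Good U (Yh (hF h S))" if "S \<subseteq> Pow U - {{}}" for S
  proof -
    have "finite S" using that U by (meson finite_Diff finite_Pow_iff finite_subset)
    then show ?thesis using that
    proof (induction S rule: finite_induct)
      case empty
      have "hF h {} = (\<lambda>_. 1)" by (simp add: hF_def fun_eq_iff)
      then show ?case using Good_ones[OF U] by simp
    next
      case (insert M S)
      have M: "finite M" "M \<noteq> {}" "M \<subseteq> U" using insert.prems U by (auto intro: finite_subset)
      have h1: "adm (hF h S)" using adm_hF[OF h] insert.prems by auto
      have eq: "hF h (insert M S) = (hF h S)(M := hF h S M * h M)"
        using insert.hyps by (auto simp: hF_def fun_eq_iff)
      have Y: "Yh (hF h (insert M S)) = Yh (hF h S) * (1 + mono M (h M - 1) * Xh (hF h S) M)"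
        unfolding eq by (rule Yh_update[OF h1 M(1,2)])
      have rho: "ordge (card M - 1) (h M - 1)" using h M by (simp add: adm_def)
      obtain L r where Lr: "okL L" "OneO U r" "1 + mono M (h M - 1) * Xh (hF h S) M = facs L * r"
        using edge_factor[OF U h1 M rho] by blast
      have "Good U (Yh (hF h S))" using insert by auto
      then show ?case unfolding Y Lr(3) by (rule Good_mult[OF U _ Lr(1,2)])
    qed
  qed
  then have G: "Good U (Yh (hF h (Pow U - {{}})))" by blast
  have "agree U (Yh (hF h (Pow U - {{}}))) (Yh h)"
    unfolding agree_def
  proof (intro allI impI)
    fix J assume J: "J \<subseteq> U"
    have fJ: "finite J" using finite_subset[OF J U] .
    have "(\<Prod>K\<in>Pow J. hF h (Pow U - {{}}) K) = (\<Prod>K\<in>Pow J. h K)"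
      by (rule prod.cong[OF refl]) (use J h in \<open>auto simp: hF_def adm_def\<close>)
    then show "ufc (Yh (hF h (Pow U - {{}}))) J = ufc (Yh h) J" using fJ by (simp add: ufc_Yh)
  qed
  then show ?thesis by (rule Good_agree[OF G])
qed


definition polyfun :: "nat \<Rightarrow> (real \<Rightarrow> real) \<Rightarrow> bool" where
  "polyfun d f \<longleftrightarrow> (\<exists>p. degree p \<le> d \<and> f = poly p)"

lemma polyfun_const: "polyfun d (\<lambda>_. c)"
  unfolding polyfun_def by (intro exI[of _ "[:c:]"]) (auto simp: fun_eq_iff)

lemma polyfun_id: "polyfun 1 (\<lambda>y. y)"
  unfolding polyfun_def by (intro exI[of _ "[:0,1:]"]) (auto simp: fun_eq_iff)

lemma polyfun_mono: "polyfun d f \<Longrightarrow> d \<le> e \<Longrightarrow> polyfun e f"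
  unfolding polyfun_def using order_trans by blast

lemma polyfun_add: "polyfun d f \<Longrightarrow> polyfun d g \<Longrightarrow> polyfun d (\<lambda>y. f y + g y)"
  unfolding polyfun_def
proof (elim exE conjE)
  fix p q assume "degree p \<le> d" "f = poly p" "degree q \<le> d" "g = poly q"
  then show "\<exists>r. degree r \<le> d \<and> (\<lambda>y. f y + g y) = poly r"
    by (intro exI[of _ "p + q"]) (auto simp: fun_eq_iff intro: order.trans[OF degree_add_le_max])
qed

lemma polyfun_uminus: "polyfun d f \<Longrightarrow> polyfun d (\<lambda>y. - f y)"
  unfolding polyfun_def
proof (elim exE conjE)
  fix p assume "degree p \<le> d" "f = poly p"
  then show "\<exists>r. degree r \<le> d \<and> (\<lambda>y. - f y) = poly r"
    by (intro exI[of _ "- p"]) (simp add: fun_eq_iff)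
qed

lemma polyfun_diff: "polyfun d f \<Longrightarrow> polyfun d g \<Longrightarrow> polyfun d (\<lambda>y. f y - g y)"
proof -
  assume a: "polyfun d f" "polyfun d g"
  have "polyfun d (\<lambda>y. f y + - g y)" by (rule polyfun_add[OF a(1) polyfun_uminus[OF a(2)]])
  then show ?thesis by (simp only: diff_conv_add_uminus)
qed

lemma polyfun_mult: "polyfun d f \<Longrightarrow> polyfun e g \<Longrightarrow> polyfun (d + e) (\<lambda>y. f y * g y)"
  unfolding polyfun_def
proof (elim exE conjE)
  fix p q assume "degree p \<le> d" "f = poly p" "degree q \<le> e" "g = poly q"
  then show "\<exists>r. degree r \<le> d + e \<and> (\<lambda>y. f y * g y) = poly r"
    by (intro exI[of _ "p * q"]) (auto simp: fun_eq_iff intro: order.trans[OF degree_mult_le])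
qed

lemma polyfun_mult': "polyfun d f \<Longrightarrow> polyfun e g \<Longrightarrow> d + e \<le> k \<Longrightarrow> polyfun k (\<lambda>y. f y * g y)"
  using polyfun_mult polyfun_mono by blast

lemma polyfun_cmult: "polyfun d f \<Longrightarrow> polyfun d (\<lambda>y. c * f y)"
  using polyfun_mult[OF polyfun_const[of 0 c]] by simp

lemma polyfun_shift: "polyfun d f \<Longrightarrow> polyfun d (\<lambda>y. f (y + c))"
  unfolding polyfun_def
proof (elim exE conjE)
  fix p assume "degree p \<le> d" "f = poly p"
  then show "\<exists>r. degree r \<le> d \<and> (\<lambda>y. f (y + c)) = poly r"
    by (intro exI[of _ "pcompose p [:c,1:]"]) (auto simp: fun_eq_iff poly_pcompose degree_pcompose algebra_simps)
qed

lemma polyfun_sum: "(\<And>i. i \<in> S \<Longrightarrow> polyfun d (F i)) \<Longrightarrow> polyfun d (\<lambda>y. \<Sum>i\<in>S. F i y)"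
proof (induction S rule: infinite_finite_induct)
  case (infinite S) then show ?case by (simp add: polyfun_const)
next
  case empty then show ?case by (simp add: polyfun_const)
next
  case (insert x F) then show ?case by (simp add: polyfun_add)
qed

lemma polyfun_pow_diff: "polyfun (k - 1) (\<lambda>y. (y + c) ^ k - y ^ k)"
proof (induction k)
  case 0 then show ?case by (simp add: polyfun_const)
next
  case (Suc k)
  have e: "(\<lambda>y. (y + c) ^ Suc k - y ^ Suc k) = (\<lambda>y. (y + c) * ((y + c) ^ k - y ^ k) + c * y ^ k)"
    by (simp add: fun_eq_iff algebra_simps)
  have pk: "polyfun k (\<lambda>y. y ^ k)"
  proof (induction k)
    case 0 then show ?case using polyfun_const[of 0 1] by simp
  next
    case (Suc k) then show ?case using polyfun_mult[OF polyfun_id Suc] by simp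
  qed
  have a: "polyfun k (\<lambda>y. (y + c) * ((y + c) ^ k - y ^ k))"
  proof (cases k)
    case 0 then show ?thesis by (simp add: polyfun_const)
  next
    case (Suc j)
    have "polyfun 1 (\<lambda>y. y + c)" using polyfun_add[OF polyfun_id polyfun_const] .
    from polyfun_mult[OF this Suc.IH] show ?thesis using Suc by simp
  qed
  show ?case unfolding e using polyfun_add[OF a polyfun_cmult[OF pk]] by simp
qed

lemma polyfun_fdiff: "polyfun (Suc d) f \<Longrightarrow> polyfun d (\<lambda>y. f (y + c) - f y)"
proof -
  assume "polyfun (Suc d) f"
  then obtain p where p: "degree p \<le> Suc d" "f = poly p" unfolding polyfun_def by blast
  have e: "(\<lambda>y. f (y + c) - f y) = (\<lambda>y. \<Sum>i\<le>degree p. coeff p i * ((y + c) ^ i - y ^ i))"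
    by (simp add: fun_eq_iff p(2) poly_altdef right_diff_distrib sum_subtractf)
  show ?thesis unfolding e
  proof (rule polyfun_sum)
    fix i assume "i \<in> {..degree p}"
    then have "i - 1 \<le> d" using p by auto
    then show "polyfun d (\<lambda>y. coeff p i * ((y + c) ^ i - y ^ i))"
      using polyfun_cmult[OF polyfun_pow_diff] polyfun_mono by blast
  qed
qed

lemma polyfun_0_const: "polyfun 0 f \<Longrightarrow> f x = f y"
proof -
  assume "polyfun 0 f"
  then obtain p where p: "degree p = 0" "f = poly p" unfolding polyfun_def by blast
  then obtain c where "p = [:c:]" by (metis degree_eq_zeroE)
  then show ?thesis using p by simp
qed


section \<open>The series q\<close>

definition qs :: "real \<Rightarrow> real fps" where
  "qs x = Abs_fps (\<lambda>m. Qpol (int m) x)"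

definition cc :: "real \<Rightarrow> real" where
  "cc x = - x * (2 * x + 1) / 4"

lemma Qpol_nat: "Qpol (int m) x = (-1) ^ m / (2 ^ m * fact m) * (\<Prod>k\<in>{1..2*m}. x + 1 - real k / 2)"
  by (simp add: Qpol_def)

lemma qs_nth: "qs x $ m = (-1) ^ m / (2 ^ m * fact m) * (\<Prod>k\<in>{1..2*m}. x + 1 - real k / 2)"
  by (simp add: qs_def Qpol_nat)

lemma qs_nth0[simp]: "qs x $ 0 = 1"
  by (simp add: qs_nth)

lemma qs_zero: "qs 0 = 1"
proof (rule fps_ext)
  fix m show "qs 0 $ m = 1 $ m"
  proof (cases m)
    case (Suc j)
    have "(\<Prod>k\<in>{1..2*m}. (0::real) + 1 - real k / 2) = 0"
      by (rule prod_zero) (use Suc in \<open>auto intro!: bexI[of _ 2]\<close>)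
    then show ?thesis using Suc by (simp add: qs_nth)
  qed simp
qed

lemma prod_shift2:
  "(\<Prod>k\<in>{1..2 * Suc m}. x + 1 - real k / 2) = (x + 1/2) * x * (\<Prod>k\<in>{1..2*m}. x - real k / 2)"
proof -
  let ?g = "\<lambda>k. x + 1 - real k / 2"
  let ?N = "Suc (Suc (2*m))"
  have "prod ?g {1..2 * Suc m} = prod ?g {1..?N}" by (simp only: mult_Suc_right add_2_eq_Suc)
  also have "\<dots> = ?g 1 * prod ?g {Suc 1..?N}"
    by (rule prod.atLeast_Suc_atMost) simp
  also have "prod ?g {Suc 1..?N} = ?g (Suc 1) * prod ?g {Suc (Suc 1)..?N}"
    by (rule prod.atLeast_Suc_atMost) simp
  also have "{Suc (Suc 1)..?N} = {1+2..2*m+2}" by auto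
  also have "prod ?g {1+2..2*m+2} = prod (\<lambda>i. ?g (i + 2)) {1..2*m}"
    by (rule prod.shift_bounds_cl_nat_ivl)
  also have "prod (\<lambda>i. ?g (i + 2)) {1..2*m} = (\<Prod>k\<in>{1..2*m}. x - real k / 2)"
    by (rule prod.cong[OF refl]) (simp add: field_simps)
  also have "?g 1 = x + 1/2" by simp
  also have "?g (Suc 1) = x" by simp
  finally show ?thesis by (simp only: mult.assoc)
qed

lemma qs_deriv: "fps_deriv (qs x) = fps_const (cc x) * qs (x - 1)"
proof (rule fps_ext)
  fix m
  let ?P = "\<Prod>k\<in>{1..2*m}. x - real k / 2"
  have P': "(\<Prod>k\<in>{1..2*m}. (x - 1) + 1 - real k / 2) = ?P" by simp
  have "fps_deriv (qs x) $ m = real (m + 1) * qs x $ Suc m" by simp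
  also have "qs x $ Suc m = (-1) ^ Suc m / (2 ^ Suc m * fact (Suc m)) * ((x + 1/2) * x * ?P)"
    by (simp only: qs_nth prod_shift2)
  also have "real (m + 1) * ((-1) ^ Suc m / (2 ^ Suc m * fact (Suc m)) * ((x + 1/2) * x * ?P))
      = cc x * ((-1) ^ m / (2 ^ m * fact m) * ?P)"
  proof -
    define a where "a = (-1) ^ m / (2 ^ m * fact m :: real)"
    have h: "(-1) ^ Suc m / (2 ^ Suc m * fact (Suc m)) = - a / (2 * (real m + 1))"
      by (simp add: a_def fact_Suc field_simps)
    have "real (m + 1) * (- a / (2 * (real m + 1)) * ((x + 1/2) * x * ?P)) = cc x * (a * ?P)"
      by (simp add: cc_def field_simps)
    then show ?thesis unfolding h a_def .
  qed
  also have "\<dots> = (fps_const (cc x) * qs (x - 1)) $ m"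
    by (simp add: qs_nth P')
  finally show "fps_deriv (qs x) $ m = (fps_const (cc x) * qs (x - 1)) $ m" .
qed


definition rho :: "real \<Rightarrow> real fps" where
  "rho x = qs (x - 1) * inverse (qs x)"

lemma qs_inv: "qs x * inverse (qs x) = 1"
  by (rule inverse_mult_eq_1') simp

lemma rho_nth0: "rho x $ 0 = 1"
  by (simp add: rho_def)

lemma rho_deriv:
  "fps_deriv (rho x) = rho x * (fps_const (cc (x - 1)) * rho (x - 1) - fps_const (cc x) * rho x)"
proof -
  let ?A = "qs (x - 1)" and ?B = "qs x" and ?iB = "inverse (qs x)"
  have dA: "fps_deriv ?A = fps_const (cc (x - 1)) * (rho (x - 1) * ?A)"
  proof -
    have "rho (x - 1) * ?A = qs (x - 1 - 1) * (inverse ?A * ?A)" by (simp add: rho_def mult.assoc)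
    also have "inverse ?A * ?A = 1" by (rule inverse_mult_eq_1) simp
    finally have "rho (x - 1) * ?A = qs (x - 1 - 1)" by simp
    then show ?thesis by (simp add: qs_deriv)
  qed
  have diB: "fps_deriv ?iB = - (fps_const (cc x) * ?A) * ?iB ^ 2"
    using fps_inverse_deriv[of ?B] by (simp add: qs_deriv)
  have "fps_deriv (rho x) = fps_deriv ?A * ?iB + ?A * fps_deriv ?iB"
    by (simp add: rho_def)
  also have "\<dots> = fps_const (cc (x - 1)) * rho (x - 1) * (?A * ?iB) - fps_const (cc x) * (?A * ?iB) * (?A * ?iB)"
    unfolding dA diB by (simp add: algebra_simps power2_eq_square)
  also have "\<dots> = rho x * (fps_const (cc (x - 1)) * rho (x - 1) - fps_const (cc x) * rho x)"
    by (simp add: rho_def algebra_simps)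
  finally show ?thesis .
qed

lemma polyfun_cc: "polyfun 2 cc"
proof -
  have a: "polyfun 1 (\<lambda>y. - (2 * y + 1) / 4)"
  proof -
    have "polyfun 1 (\<lambda>y. (- 1/2) * y + (- 1/4))"
      by (rule polyfun_add[OF polyfun_cmult[OF polyfun_id] polyfun_const])
    moreover have "(\<lambda>y. (- 1/2) * y + (- 1/4)) = (\<lambda>y. - (2 * y + 1) / 4 :: real)"
      by (simp add: fun_eq_iff field_simps)
    ultimately show ?thesis by simp
  qed
  have e: "(\<lambda>y. y * (- (2 * y + 1) / 4)) = cc" by (simp add: fun_eq_iff cc_def algebra_simps)
  have "polyfun (1 + 1) cc" using polyfun_mult[OF polyfun_id a] unfolding e .
  then show ?thesis by (simp only: one_add_one)
qed

lemma rho_rec: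
  "rho x $ Suc m = (1 / real (Suc m)) * (\<Sum>i=0..m. rho x $ i *
     (cc (x - 1) * rho (x - 1) $ (m - i) - cc x * rho x $ (m - i)))"
proof -
  have "real (Suc m) * rho x $ Suc m = fps_deriv (rho x) $ m" by simp
  also have "\<dots> = (\<Sum>i=0..m. rho x $ i * (cc (x - 1) * rho (x - 1) $ (m - i) - cc x * rho x $ (m - i)))"
    unfolding rho_deriv fps_mult_nth by simp
  finally show ?thesis by (simp add: field_simps del: of_nat_Suc)
qed

lemma polyfun_rho: "polyfun m (\<lambda>x. rho x $ m)"
proof (induction m rule: less_induct)
  case (less m)
  show ?case
  proof (cases m)
    case 0 then show ?thesis by (simp add: rho_nth0 polyfun_const)
  next
    case (Suc k)
    have D: "polyfun (j + 1) (\<lambda>x. cc (x - 1) * rho (x - 1) $ j - cc x * rho x $ j)" if "j \<le> k" for j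
    proof -
      have "polyfun (2 + j) (\<lambda>x. cc x * rho x $ j)"
        by (rule polyfun_mult[OF polyfun_cc less[of j]]) (use that Suc in simp)
      then have "polyfun (Suc (j + 1)) (\<lambda>x. cc x * rho x $ j)" by simp
      from polyfun_fdiff[OF this, of "- 1"] show ?thesis by simp
    qed
    have "polyfun (Suc k) (\<lambda>x. \<Sum>i=0..k. rho x $ i *
        (cc (x - 1) * rho (x - 1) $ (k - i) - cc x * rho x $ (k - i)))"
    proof (rule polyfun_sum)
      fix i assume i: "i \<in> {0..k}"
      show "polyfun (Suc k) (\<lambda>x. rho x $ i * (cc (x - 1) * rho (x - 1) $ (k - i) - cc x * rho x $ (k - i)))"
        by (rule polyfun_mult'[OF less[of i] D[of "k - i"]]) (use i Suc in auto)
    qed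
    from polyfun_cmult[OF this, of "1 / real (Suc k)"] show ?thesis
      unfolding Suc rho_rec by simp
  qed
qed

definition ell :: "real \<Rightarrow> real fps" where
  "ell x = fps_deriv (qs x) * inverse (qs x)"

lemma ell_nth: "ell x $ m = cc x * rho x $ m"
  by (simp add: ell_def qs_deriv rho_def mult.assoc)

lemma polyfun_ell: "polyfun (m + 2) (\<lambda>x. ell x $ m)"
  unfolding ell_nth using polyfun_mult[OF polyfun_cc polyfun_rho[of m]] by (simp add: add.commute)


lemma Pow_insert_split:
  assumes "i \<notin> K"
  shows "Pow (insert i K) = Pow K \<union> insert i ` Pow K" "Pow K \<inter> insert i ` Pow K = {}"
    "inj_on (insert i) (Pow K)"
proof -
  show "Pow (insert i K) = Pow K \<union> insert i ` Pow K" by (rule Pow_insert)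
  show "Pow K \<inter> insert i ` Pow K = {}" using assms by auto
  show "inj_on (insert i) (Pow K)"
    by (rule inj_onI) (use assms in \<open>metis PowD insert_absorb insert_ident subsetD\<close>)
qed

lemma sum_Pow_insert:
  assumes "finite K" "i \<notin> K"
  shows "sum f (Pow (insert i K)) = sum f (Pow K) + sum (\<lambda>L. f (insert i L)) (Pow K)"
proof -
  note s = Pow_insert_split[OF assms(2)]
  have "sum f (Pow (insert i K)) = sum f (Pow K) + sum f (insert i ` Pow K)"
    unfolding s(1) by (rule sum.union_disjoint) (use assms s(2) in auto)
  also have "sum f (insert i ` Pow K) = sum (\<lambda>L. f (insert i L)) (Pow K)"
    by (simp add: sum.reindex[OF s(3)])
  finally show ?thesis .
qed

lemma prod_Pow_insert:
  assumes "finite K" "i \<notin> K"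
  shows "prod f (Pow (insert i K)) = prod f (Pow K) * prod (\<lambda>L. f (insert i L)) (Pow K)"
proof -
  note s = Pow_insert_split[OF assms(2)]
  have "prod f (Pow (insert i K)) = prod f (Pow K) * prod f (insert i ` Pow K)"
    unfolding s(1) by (rule prod.union_disjoint) (use assms s(2) in auto)
  also have "prod f (insert i ` Pow K) = prod (\<lambda>L. f (insert i L)) (Pow K)"
    by (simp add: prod.reindex[OF s(3)])
  finally show ?thesis .
qed

lemma card_insert_diff:
  assumes "finite K" "i \<notin> K" "L \<subseteq> K"
  shows "card (insert i K - L) = Suc (card (K - L))" "card (insert i K - insert i L) = card (K - L)"
proof -
  have "insert i K - L = insert i (K - L)" using assms by auto
  then show "card (insert i K - L) = Suc (card (K - L))" using assms by simp
  have "insert i K - insert i L = K - L" using assms by auto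
  then show "card (insert i K - insert i L) = card (K - L)" by simp
qed

section \<open>Mixed differences\<close>

definition aL :: "(nat \<Rightarrow> real) \<Rightarrow> nat set \<Rightarrow> real" where
  "aL a L = (\<Sum>l\<in>L. a l)"

lemma aL_insert: "finite L \<Longrightarrow> i \<notin> L \<Longrightarrow> aL a (insert i L) = aL a L + a i"
  by (simp add: aL_def)

definition MD :: "(nat \<Rightarrow> real) \<Rightarrow> (real \<Rightarrow> real) \<Rightarrow> nat set \<Rightarrow> real" where
  "MD a F K = (\<Sum>L\<in>Pow K. (-1) ^ card (K - L) * F (aL a L))"

lemma MD_zero:
  assumes "finite K"
  shows "polyfun d F \<Longrightarrow> d < card K \<Longrightarrow> MD a F K = 0"
  using assms
proof (induction K arbitrary: d F rule: finite_induct)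
  case empty then show ?case by simp
next
  case (insert i K)
  define G where "G y = F (y + a i) - F y" for y
  have fL: "\<And>L. L \<in> Pow K \<Longrightarrow> finite L" using insert.hyps(1) finite_subset by auto
  have "MD a F (insert i K) = (\<Sum>L\<in>Pow K. (-1) ^ card (insert i K - L) * F (aL a L)) +
      (\<Sum>L\<in>Pow K. (-1) ^ card (insert i K - insert i L) * F (aL a (insert i L)))"
    unfolding MD_def by (rule sum_Pow_insert[OF insert.hyps(1,2)])
  also have "\<dots> = (\<Sum>L\<in>Pow K. (-1) ^ card (K - L) * G (aL a L))"
    unfolding sum.distrib[symmetric]
  proof (rule sum.cong[OF refl])
    fix L assume L: "L \<in> Pow K"
    have iL: "i \<notin> L" using L insert.hyps(2) by auto
    show "(-1) ^ card (insert i K - L) * F (aL a L) + (-1) ^ card (insert i K - insert i L) * F (aL a (insert i L))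
        = (-1) ^ card (K - L) * G (aL a L)"
      using card_insert_diff[OF insert.hyps(1,2), of L] L aL_insert[OF fL[OF L] iL, of a]
      by (simp add: G_def algebra_simps)
  qed
  also have "\<dots> = MD a G K" by (simp add: MD_def)
  also have "\<dots> = 0"
  proof (cases d)
    case 0
    have "G y = 0" for y using polyfun_0_const[of F] insert.prems 0 by (simp add: G_def)
    then show ?thesis by (simp add: MD_def)
  next
    case (Suc d')
    have "polyfun d' G" unfolding G_def using polyfun_fdiff insert.prems Suc by blast
    moreover have "d' < card K" using insert.prems Suc insert.hyps by simp
    ultimately show ?thesis using insert.IH insert.hyps by blast
  qed
  finally show ?case .
qed

section \<open>Logarithmic derivatives\<close>

definition LD :: "real fps \<Rightarrow> real fps" where
  "LD F = fps_deriv F * inverse F"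

lemma LD_mult:
  assumes "F $ 0 \<noteq> 0" "G $ 0 \<noteq> 0"
  shows "LD (F * G) = LD F + LD G"
proof -
  have i: "inverse (F * G) = inverse F * inverse G" by (rule fps_inverse_mult)
  have "LD (F * G) = fps_deriv F * inverse F * (G * inverse G) + fps_deriv G * inverse G * (F * inverse F)"
    unfolding LD_def i by (simp add: algebra_simps)
  then show ?thesis using assms by (simp add: inverse_mult_eq_1' LD_def)
qed

lemma LD_inverse:
  assumes "F $ 0 \<noteq> 0"
  shows "LD (inverse F) = - LD F"
proof -
  have "LD (inverse F) = - fps_deriv F * inverse F * (inverse F * F)"
    unfolding LD_def fps_inverse_deriv[OF assms] using assms
    by (simp add: power2_eq_square algebra_simps)
  then show ?thesis using assms by (simp add: inverse_mult_eq_1 LD_def)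
qed

lemma LD_one: "LD 1 = 0" by (simp add: LD_def)

lemma LD_prod:
  assumes "\<And>x. x \<in> S \<Longrightarrow> f x $ 0 \<noteq> 0"
  shows "LD (prod f S) = (\<Sum>x\<in>S. LD (f x))"
  using assms
proof (induction S rule: infinite_finite_induct)
  case (insert x F)
  have "prod f F $ 0 \<noteq> 0" using insert by (simp add: prod_nth0)
  then show ?case using insert by (simp add: LD_mult)
qed (simp_all add: LD_one)

lemma LD_ord:
  assumes F0: "F $ 0 = 1" and o: "ordge r (LD F)"
  shows "ordge (Suc r) (F - 1)"
proof -
  have "fps_deriv F = LD F * F"
    using inverse_mult_eq_1[of F] F0 by (simp add: LD_def mult.assoc)
  then have od: "ordge r (fps_deriv F)" using ordge_mult'[OF o ordge_0[of F]] by simp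
  show ?thesis unfolding ordge_def
  proof (intro allI impI)
    fix j assume j: "j < Suc r"
    show "(F - 1) $ j = 0"
    proof (cases j)
      case 0 then show ?thesis using F0 by simp
    next
      case (Suc i)
      then have "fps_deriv F $ i = 0" using od j by (simp add: ordge_def)
      then show ?thesis using Suc by (simp del: of_nat_Suc)
    qed
  qed
qed


section \<open>The family f_K\<close>

definition phi :: "(nat \<Rightarrow> real) \<Rightarrow> (real \<Rightarrow> real fps) \<Rightarrow> nat set \<Rightarrow> nat set \<Rightarrow> real fps" where
  "phi a Q K L = (if even (card (K - L)) then Q (aL a L) else inverse (Q (aL a L)))"

definition fKQ :: "(nat \<Rightarrow> real) \<Rightarrow> (real \<Rightarrow> real fps) \<Rightarrow> nat set \<Rightarrow> real fps" where
  "fKQ a Q K = (\<Prod>L\<in>Pow K. phi a Q K L)"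

lemma fKQ_insert:
  assumes K: "finite K" "j \<notin> K" and Q: "\<And>y. Q y $ 0 \<noteq> 0"
  shows "fKQ a Q (insert j K) = fKQ a (\<lambda>y. Q (y + a j) * inverse (Q y)) K"
proof -
  have fL: "\<And>L. L \<in> Pow K \<Longrightarrow> finite L" using K(1) finite_subset by auto
  have "fKQ a Q (insert j K) = (\<Prod>L\<in>Pow K. phi a Q (insert j K) L) *
      (\<Prod>L\<in>Pow K. phi a Q (insert j K) (insert j L))"
    unfolding fKQ_def by (rule prod_Pow_insert[OF K(1,2)])
  also have "\<dots> = (\<Prod>L\<in>Pow K. phi a (\<lambda>y. Q (y + a j) * inverse (Q y)) K L)"
    unfolding prod.distrib[symmetric]
  proof (rule prod.cong[OF refl])
    fix L assume L: "L \<in> Pow K"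
    have jL: "j \<notin> L" using L K(2) by auto
    note c = card_insert_diff[OF K(1,2), of L]
    have aI: "aL a (insert j L) = aL a L + a j" using aL_insert[OF fL[OF L] jL] .
    have Q0: "Q (aL a L) $ 0 \<noteq> 0" "Q (aL a L + a j) $ 0 \<noteq> 0" using Q by auto
    show "phi a Q (insert j K) L * phi a Q (insert j K) (insert j L) =
        phi a (\<lambda>y. Q (y + a j) * inverse (Q y)) K L"
    proof (cases "even (card (K - L))")
      case True then show ?thesis using c L by (simp add: phi_def aI mult.commute)
    next
      case False then show ?thesis using c L Q0
        by (simp add: phi_def aI fps_inverse_mult mult.commute)
    qed
  qed
  finally show ?thesis by (simp add: fKQ_def)
qed

lemma mob_prod:
  assumes "finite I"
  shows "(\<And>y. Q y $ 0 \<noteq> 0) \<Longrightarrow> (\<Prod>K\<in>Pow I. fKQ a Q K) = Q (aL a I)"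
  using assms
proof (induction I arbitrary: Q rule: finite_induct)
  case empty then show ?case by (simp add: fKQ_def phi_def aL_def)
next
  case (insert j I)
  define Q' where "Q' = (\<lambda>y. Q (y + a j) * inverse (Q y))"
  have Q'0: "Q' y $ 0 \<noteq> 0" for y using insert.prems by (simp add: Q'_def)
  have fK: "\<And>K. K \<in> Pow I \<Longrightarrow> finite K" using insert.hyps(1) finite_subset by auto
  have "(\<Prod>K\<in>Pow (insert j I). fKQ a Q K) = (\<Prod>K\<in>Pow I. fKQ a Q K) * (\<Prod>K\<in>Pow I. fKQ a Q (insert j K))"
    by (rule prod_Pow_insert[OF insert.hyps(1,2)])
  also have "(\<Prod>K\<in>Pow I. fKQ a Q (insert j K)) = (\<Prod>K\<in>Pow I. fKQ a Q' K)"
  proof (rule prod.cong[OF refl])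
    fix K assume K: "K \<in> Pow I"
    have "j \<notin> K" using K insert.hyps(2) by auto
    then show "fKQ a Q (insert j K) = fKQ a Q' K"
      unfolding Q'_def by (rule fKQ_insert[OF fK[OF K] _ insert.prems])
  qed
  also have "\<dots> = Q' (aL a I)" using insert.IH[OF Q'0] .
  also have "(\<Prod>K\<in>Pow I. fKQ a Q K) = Q (aL a I)" using insert.IH insert.prems by blast
  finally have "(\<Prod>K\<in>Pow (insert j I). fKQ a Q K) = Q (aL a I + a j) * (inverse (Q (aL a I)) * Q (aL a I))"
    by (simp add: Q'_def algebra_simps)
  also have "inverse (Q (aL a I)) * Q (aL a I) = 1" using insert.prems by (rule inverse_mult_eq_1)
  finally show ?case using aL_insert[OF insert.hyps(1,2)] by simp
qed

lemma LD_qs: "LD (qs x) = ell x" by (simp add: LD_def ell_def)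

lemma fps_const_m1: "fps_const (-1::real) * F = - F" by (simp add: fps_eq_iff)

lemma adm_fK: "adm (fKQ a qs)"
  unfolding adm_def
proof (intro conjI allI impI)
  show "fKQ a qs {} = 1" by (simp add: fKQ_def phi_def aL_def qs_zero)
  fix K
  have p0: "phi a qs K L $ 0 = 1" for L by (simp add: phi_def)
  show "fKQ a qs K $ 0 = 1" by (simp add: fKQ_def prod_nth0 p0)
  assume fK: "finite K"
  have LDf: "LD (fKQ a qs K) = (\<Sum>L\<in>Pow K. fps_const ((-1) ^ card (K - L)) * ell (aL a L))"
    unfolding fKQ_def
  proof (subst LD_prod)
    fix L show "phi a qs K L $ 0 \<noteq> 0" by (simp add: p0)
  next
    show "(\<Sum>L\<in>Pow K. LD (phi a qs K L)) = (\<Sum>L\<in>Pow K. fps_const ((-1) ^ card (K - L)) * ell (aL a L))"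
      by (rule sum.cong[OF refl]) (simp add: phi_def LD_inverse LD_qs fps_const_m1)
  qed
  have "ordge (card K - 2) (LD (fKQ a qs K))"
    unfolding ordge_def
  proof (intro allI impI)
    fix m assume m: "m < card K - 2"
    have "LD (fKQ a qs K) $ m = MD a (\<lambda>x. ell x $ m) K"
      unfolding LDf MD_def by (simp add: fps_sum_nth)
    also have "\<dots> = 0" by (rule MD_zero[OF fK polyfun_ell]) (use m in simp)
    finally show "LD (fKQ a qs K) $ m = 0" .
  qed
  from LD_ord[OF _ this] have "ordge (Suc (card K - 2)) (fKQ a qs K - 1)"
    by (simp add: fKQ_def prod_nth0 p0)
  then show "ordge (card K - 1) (fKQ a qs K - 1)" by (rule ordge_mono) simp
qed

lemma Yh_fK: "finite I \<Longrightarrow> ufc (Yh (fKQ a qs)) I = qs (aL a I)"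
  by (simp add: ufc_Yh mob_prod)


definition WV :: "real fps uf \<Rightarrow> nat set \<Rightarrow> int \<Rightarrow> real" where
  "WV V I d = (if d + int (card I) - 1 < 0 then 0 else ufc V I $ nat (d + int (card I) - 1))"

definition ospU :: "nat set \<Rightarrow> nat \<Rightarrow> nat set list set" where
  "ospU U k = {Is. length Is = k \<and> (\<forall>j<k. Is ! j \<noteq> {}) \<and>
      (\<forall>i<k. \<forall>j<k. i \<noteq> j \<longrightarrow> Is ! i \<inter> Is ! j = {}) \<and> \<Union>(set Is) = U}"

definition boxS :: "int \<Rightarrow> (nat \<Rightarrow> int) \<Rightarrow> nat \<Rightarrow> int list set" where
  "boxS S lo k = {ds. length ds = k \<and> sum_list ds = S \<and> (\<forall>i<k. lo i \<le> ds ! i)}"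

lemma finite_ospU: "finite U \<Longrightarrow> finite (ospU U k)"
proof -
  assume U: "finite U"
  have "ospU U k \<subseteq> {Is. set Is \<subseteq> Pow U \<and> length Is = k}"
    unfolding ospU_def by auto
  moreover have "finite {Is. set Is \<subseteq> Pow U \<and> length Is = k}"
    using U by (intro finite_lists_length_eq) simp
  ultimately show ?thesis by (rule finite_subset)
qed

lemma finite_boxS:
  assumes "\<And>i. L \<le> lo i"
  shows "finite (boxS S lo k)"
proof -
  have "boxS S lo k \<subseteq> {ds. set ds \<subseteq> {L..S - int k * L + L} \<and> length ds = k}"
  proof
    fix ds assume ds: "ds \<in> boxS S lo k"
    have ge: "\<forall>y\<in>set ds. L \<le> y"
    proof
      fix y assume "y \<in> set ds"
      then obtain i where i: "i < length ds" "ds ! i = y" by (auto simp: in_set_conv_nth)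
      then have "lo i \<le> y" using ds by (auto simp: boxS_def)
      then show "L \<le> y" using assms[of i] by simp
    qed
    have "set ds \<subseteq> {L..S - int k * L + L}"
    proof
      fix x assume x: "x \<in> set ds"
      have "x - L \<in> set (map (\<lambda>y. y - L) ds)" using x by simp
      moreover have "\<forall>z\<in>set (map (\<lambda>y. y - L) ds). 0 \<le> z" using ge by simp
      ultimately have "x - L \<le> sum_list (map (\<lambda>y. y - L) ds)"
        by (meson member_le_sum_list)
      also have "sum_list (map (\<lambda>y. y - L) ds) = sum_list ds - int (length ds) * L"
        by (induction ds) (auto simp: algebra_simps)
      finally show "x \<in> {L..S - int k * L + L}" using x ge ds by (auto simp: boxS_def)
    qed
    then show "ds \<in> {ds. set ds \<subseteq> {L..S - int k * L + L} \<and> length ds = k}"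
      using ds by (auto simp: boxS_def)
  qed
  moreover have "finite {ds. set ds \<subseteq> {L..S - int k * L + L} \<and> length ds = k}"
    by (intro finite_lists_length_eq) simp
  ultimately show ?thesis by (rule finite_subset)
qed

lemma ospU_card:
  assumes U: "finite U" and Is: "Is \<in> ospU U k"
  shows "k \<le> card U"
proof -
  define f where "f j = (SOME x. x \<in> Is ! j)" for j
  have len: "length Is = k" using Is by (simp add: ospU_def)
  have fin: "f j \<in> Is ! j" if "j < k" for j
  proof -
    have "Is ! j \<noteq> {}" using Is that by (simp add: ospU_def)
    then show ?thesis unfolding f_def by (simp add: some_in_eq)
  qed
  have "inj_on f {..<k}"
  proof (rule inj_onI)
    fix i j assume i: "i \<in> {..<k}" and j: "j \<in> {..<k}" and e: "f i = f j"
    show "i = j"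
    proof (rule ccontr)
      assume "i \<noteq> j"
      then have "Is ! i \<inter> Is ! j = {}" using Is i j by (simp add: ospU_def)
      moreover have "f i \<in> Is ! i" using fin i by simp
      moreover have "f i \<in> Is ! j" unfolding e using fin j by simp
      ultimately show False by blast
    qed
  qed
  moreover have "f ` {..<k} \<subseteq> U"
  proof
    fix x assume "x \<in> f ` {..<k}"
    then obtain j where j: "j < k" "x = f j" by auto
    have "Is ! j \<in> set Is" using j len by simp
    then show "x \<in> U" using fin[OF j(1)] j Is by (auto simp: ospU_def)
  qed
  ultimately show ?thesis using card_inj_on_le[OF _ _ U] by fastforce
qed


definition ins :: "nat \<Rightarrow> 'a \<Rightarrow> 'a list \<Rightarrow> 'a list" where
  "ins j x xs = take j xs @ x # drop j xs"

definition rem :: "nat \<Rightarrow> 'a list \<Rightarrow> 'a list" where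
  "rem j xs = take j xs @ drop (Suc j) xs"

lemma length_ins[simp]: "j \<le> length xs \<Longrightarrow> length (ins j x xs) = Suc (length xs)"
  by (simp add: ins_def)

lemma nth_ins: "j \<le> length xs \<Longrightarrow> ins j x xs ! i = (if i < j then xs ! i else if i = j then x else xs ! (i - 1))"
  by (auto simp: ins_def nth_append min_def nth_Cons' nth_take)

lemma length_rem[simp]: "j < length xs \<Longrightarrow> length (rem j xs) = length xs - 1"
  by (simp add: rem_def)

lemma nth_rem: "j < length xs \<Longrightarrow> i < length xs - 1 \<Longrightarrow> rem j xs ! i = (if i < j then xs ! i else xs ! Suc i)"
  by (auto simp: rem_def nth_append min_def nth_take)

lemma ins_rem: "j < length xs \<Longrightarrow> ins j (xs ! j) (rem j xs) = xs"
  by (simp add: ins_def rem_def min_def Cons_nth_drop_Suc)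

lemma rem_ins: "j \<le> length xs \<Longrightarrow> rem j (ins j x xs) = xs"
  by (simp add: ins_def rem_def min_def)

lemma mset_ins: "mset (ins j x xs) = add_mset x (mset xs)"
  by (simp add: ins_def) (metis mset_append append_take_drop_id)

lemma sum_list_ins: "sum_list (ins j x (xs :: int list)) = x + sum_list xs"
  by (simp add: ins_def) (metis add.left_commute sum_list_append append_take_drop_id)

lemma prod_ins_reindex:
  assumes "j \<le> m" "length xs = m" "length ys = m"
  shows "(\<Prod>i\<in>{..<Suc m} - {j}. F (ins j x xs ! i) (ins j y ys ! i)) = (\<Prod>i<m. F (xs ! i) (ys ! i))"
  by (rule prod.reindex_bij_witness[of _ "\<lambda>i. if i < j then i else Suc i" "\<lambda>i. if i < j then i else i - 1"])
     (use assms in \<open>auto simp: nth_ins\<close>)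

lemma prod_add_single:
  fixes w c :: "nat \<Rightarrow> real"
  assumes "finite A" "\<And>i j. i \<in> A \<Longrightarrow> j \<in> A \<Longrightarrow> i \<noteq> j \<Longrightarrow> c i * c j = 0"
  shows "(\<Prod>i\<in>A. w i + c i) = (\<Prod>i\<in>A. w i) + (\<Sum>j\<in>A. c j * (\<Prod>i\<in>A - {j}. w i))"
  using assms
proof (induction A rule: finite_induct)
  case (insert a A)
  have IH: "(\<Prod>i\<in>A. w i + c i) = (\<Prod>i\<in>A. w i) + (\<Sum>j\<in>A. c j * (\<Prod>i\<in>A - {j}. w i))"
    using insert by auto
  have z: "c a * (\<Sum>j\<in>A. c j * (\<Prod>i\<in>A - {j}. w i)) = 0"
    unfolding sum_distrib_left
    by (rule sum.neutral) (use insert in \<open>auto simp: mult.assoc[symmetric]\<close>)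
  have s: "(\<Sum>j\<in>insert a A. c j * (\<Prod>i\<in>insert a A - {j}. w i)) =
      c a * (\<Prod>i\<in>A. w i) + w a * (\<Sum>j\<in>A. c j * (\<Prod>i\<in>A - {j}. w i))"
  proof -
    have "(\<Sum>j\<in>insert a A. c j * (\<Prod>i\<in>insert a A - {j}. w i)) =
        c a * (\<Prod>i\<in>insert a A - {a}. w i) + (\<Sum>j\<in>A. c j * (\<Prod>i\<in>insert a A - {j}. w i))"
      using insert by simp
    also have "(\<Prod>i\<in>insert a A - {a}. w i) = (\<Prod>i\<in>A. w i)" using insert by (simp add: Diff_insert_absorb)
    also have "(\<Sum>j\<in>A. c j * (\<Prod>i\<in>insert a A - {j}. w i)) = w a * (\<Sum>j\<in>A. c j * (\<Prod>i\<in>A - {j}. w i))"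
      unfolding sum_distrib_left
    proof (rule sum.cong[OF refl])
      fix j assume j: "j \<in> A"
      have "insert a A - {j} = insert a (A - {j})" using j insert by auto
      then show "c j * (\<Prod>i\<in>insert a A - {j}. w i) = w a * (c j * (\<Prod>i\<in>A - {j}. w i))"
        using insert by simp
    qed
    finally show ?thesis .
  qed
  show ?case using insert IH z s by (simp add: algebra_simps)
qed simp


definition cK :: "real fps uf \<Rightarrow> nat set \<Rightarrow> nat set \<Rightarrow> int \<Rightarrow> real" where
  "cK V K I d = (if K \<subseteq> I then (if I = K then (if d = 0 then 1 else 0) else WV V (I - K) (d + 1)) else 0)"

lemma X_mult_nth: "(fps_const s * fps_X ^ p * F) $ N = (if p \<le> N then s * F $ (N - p) else 0)"
proof -
  have "(fps_const s * fps_X ^ p * F) $ N = s * (fps_X ^ p * F) $ N" by (simp add: mult.assoc)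
  then show ?thesis by (simp add: fps_X_power_mult_nth)
qed

lemma ufc_fac_mult:
  assumes "finite K" "finite I"
  shows "ufc (fac K s * V) I = ufc V I + (if K \<subseteq> I then fps_const s * fps_X ^ (card K - 1) * ufc V (I - K) else 0)"
  using assms by (simp add: fac_def distrib_right ufc_mono_mult)

lemma WV_fac:
  assumes K: "finite K" "K \<noteq> {}" and I: "finite I" and V0: "ufc V {} = 1"
  shows "WV (fac K s * V) I d = WV V I d + s * cK V K I d"
proof (cases "K \<subseteq> I")
  case False
  then show ?thesis using K I by (simp add: WV_def cK_def ufc_fac_mult)
next
  case True
  have cK1: "card K \<ge> 1" using K by (simp add: Suc_leI card_gt_0_iff)
  have cKI: "card K \<le> card I" using True I by (simp add: card_mono)
  show ?thesis
  proof (cases "d + int (card I) - 1 < 0")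
    case neg: True
    have "cK V K I d = 0"
    proof (cases "I = K")
      case True then show ?thesis using neg cK1 by (simp add: cK_def)
    next
      case False
      have "card (I - K) = card I - card K" using \<open>K \<subseteq> I\<close> K by (simp add: card_Diff_subset)
      then have "d + 1 + int (card (I - K)) - 1 < 0" using neg cK1 cKI by simp
      then show ?thesis using False \<open>K \<subseteq> I\<close> by (simp add: cK_def WV_def)
    qed
    then show ?thesis using neg by (simp add: WV_def)
  next
    case nn: False
    define N where "N = nat (d + int (card I) - 1)"
    have N: "int N = d + int (card I) - 1" using nn by (simp add: N_def)
    have "WV (fac K s * V) I d = ufc V I $ N + (fps_const s * fps_X ^ (card K - 1) * ufc V (I - K)) $ N"
      using nn K I True by (simp add: WV_def N_def ufc_fac_mult)
    also have "(fps_const s * fps_X ^ (card K - 1) * ufc V (I - K)) $ N = s * cK V K I d"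
    proof (cases "I = K")
      case True
      show ?thesis
      proof (cases "d = 0")
        case True
        have "N = card K - 1" using N \<open>I = K\<close> True cK1 by simp
        then show ?thesis using \<open>I = K\<close> True V0 by (simp add: X_mult_nth cK_def)
      next
        case False
        have cIK: "card I = card K" using \<open>I = K\<close> by simp
        have "\<not> (card K - 1 \<le> N) \<or> N - (card K - 1) \<noteq> 0"
          using N cIK cK1 False by linarith
        then show ?thesis using \<open>I = K\<close> False V0
          by (auto simp: X_mult_nth cK_def ufc_one)
      qed
    next
      case False
      have cD: "card (I - K) = card I - card K" using \<open>K \<subseteq> I\<close> K by (simp add: card_Diff_subset)
      show ?thesis
      proof (cases "d + 1 + int (card (I - K)) - 1 < 0")
        case True
        then have "\<not> card K - 1 \<le> N" using N cD cK1 cKI by linarith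
        then show ?thesis using True False \<open>K \<subseteq> I\<close> by (simp add: X_mult_nth cK_def WV_def)
      next
        case nn2: False
        have le: "card K - 1 \<le> N" using N cD cK1 cKI nn2 by linarith
        have "N - (card K - 1) = nat (d + 1 + int (card (I - K)) - 1)" using N cD cK1 cKI nn2 by linarith
        then show ?thesis using nn2 False \<open>K \<subseteq> I\<close> le by (simp add: X_mult_nth cK_def WV_def)
      qed
    qed
    also have "ufc V I $ N = WV V I d" using nn by (simp add: WV_def N_def)
    finally show ?thesis .
  qed
qed


section \<open>The combinatorial step\<close>

abbreviation box :: "nat \<Rightarrow> nat \<Rightarrow> nat \<Rightarrow> int list set" where
  "box g n k \<equiv> boxS (int g - 2 + int k) (\<lambda>_. - int n) k"

definition SS :: "nat \<Rightarrow> nat \<Rightarrow> (int list \<Rightarrow> real) \<Rightarrow> nat set \<Rightarrow> real fps uf \<Rightarrow> nat \<Rightarrow> real" where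
  "SS g n tau U V m = (\<Sum>j<m. \<Sum>Is\<in>ospU U m. \<Sum>es\<in>box g n m.
     tau es * WV V (Is ! j) (es ! j + 1) * (\<Prod>i\<in>{..<m} - {j}. WV V (Is ! i) (es ! i)))"

lemma ospU_upd_add:
  assumes Is: "Is \<in> ospU (U - K) k" and j: "j < k" and KU: "K \<subseteq> U"
  shows "Is[j := Is ! j \<union> K] \<in> ospU U k" "K \<subseteq> Is[j := Is ! j \<union> K] ! j" "Is[j := Is ! j \<union> K] ! j \<noteq> K"
    "Is[j := Is ! j \<union> K] ! j - K = Is ! j"
proof -
  have len: "length Is = k" using Is by (simp add: ospU_def)
  have sub: "Is ! i \<subseteq> U - K" if "i < k" for i
    using Is that len by (auto simp: ospU_def)
  have ne: "Is ! i \<noteq> {}" if "i < k" for i using Is that by (simp add: ospU_def)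
  have dis: "Is ! i \<inter> Is ! i' = {}" if "i < k" "i' < k" "i \<noteq> i'" for i i'
    using Is that by (simp add: ospU_def)
  have un: "\<Union>(set Is) = U - K" using Is by (simp add: ospU_def)
  show "K \<subseteq> Is[j := Is ! j \<union> K] ! j" using j len by simp
  show "Is[j := Is ! j \<union> K] ! j \<noteq> K" using j len ne[OF j] sub[OF j] by auto
  show "Is[j := Is ! j \<union> K] ! j - K = Is ! j" using j len sub[OF j] by auto
  show "Is[j := Is ! j \<union> K] \<in> ospU U k"
    unfolding ospU_def
  proof (intro CollectI conjI allI impI)
    show "length (Is[j := Is ! j \<union> K]) = k" using len by simp
    fix i assume i: "i < k"
    show "Is[j := Is ! j \<union> K] ! i \<noteq> {}"
      using ne[OF i] len i j by (cases "i = j") auto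
  next
    fix i i' assume i: "i < k" "i' < k" "i \<noteq> i'"
    show "Is[j := Is ! j \<union> K] ! i \<inter> Is[j := Is ! j \<union> K] ! i' = {}"
      using i len dis sub j by (auto simp: nth_list_update)
  next
    show "\<Union>(set (Is[j := Is ! j \<union> K])) = U"
    proof
      show "\<Union>(set (Is[j := Is ! j \<union> K])) \<subseteq> U"
      proof
        fix x assume "x \<in> \<Union>(set (Is[j := Is ! j \<union> K]))"
        then obtain i where i: "i < k" "x \<in> Is[j := Is ! j \<union> K] ! i"
          using len by (auto simp: in_set_conv_nth)
        then show "x \<in> U" using sub KU j len by (auto simp: nth_list_update split: if_splits)
      qed
      show "U \<subseteq> \<Union>(set (Is[j := Is ! j \<union> K]))"
      proof
        fix x assume x: "x \<in> U"
        show "x \<in> \<Union>(set (Is[j := Is ! j \<union> K]))"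
        proof (cases "x \<in> K")
          case True
          then have "x \<in> Is[j := Is ! j \<union> K] ! j" using j len by simp
          then show ?thesis using j len by (metis UnionI length_list_update nth_mem)
        next
          case False
          then have "x \<in> \<Union>(set Is)" using x un by simp
          then obtain i where i: "i < k" "x \<in> Is ! i" using len by (auto simp: in_set_conv_nth)
          then have "x \<in> Is[j := Is ! j \<union> K] ! i" using len by (cases "i = j") auto
          then show ?thesis using i len by (metis UnionI length_list_update nth_mem)
        qed
      qed
    qed
  qed
qed

lemma ospU_upd_diff:
  assumes Is: "Is \<in> ospU U k" and j: "j < k" and KI: "K \<subseteq> Is ! j" "Is ! j \<noteq> K"
  shows "Is[j := Is ! j - K] \<in> ospU (U - K) k"
proof -
  have len: "length Is = k" using Is by (simp add: ospU_def)
  have dis: "Is ! i \<inter> Is ! i' = {}" if "i < k" "i' < k" "i \<noteq> i'" for i i'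
    using Is that by (simp add: ospU_def)
  have ne: "Is ! i \<noteq> {}" if "i < k" for i using Is that by (simp add: ospU_def)
  have un: "\<Union>(set Is) = U" using Is by (simp add: ospU_def)
  have Kother: "Is ! i \<inter> K = {}" if "i < k" "i \<noteq> j" for i
    using dis[OF that(1) j that(2)] KI by blast
  show ?thesis
    unfolding ospU_def
  proof (intro CollectI conjI allI impI)
    show "length (Is[j := Is ! j - K]) = k" using len by simp
    fix i assume i: "i < k"
    show "Is[j := Is ! j - K] ! i \<noteq> {}"
    proof (cases "i = j")
      case True
      have "Is ! j - K \<noteq> {}" using KI by blast
      then show ?thesis using True len j by simp
    next
      case False then show ?thesis using ne[OF i] len i by simp
    qed
  next
    fix i i' assume i: "i < k" "i' < k" "i \<noteq> i'"
    show "Is[j := Is ! j - K] ! i \<inter> Is[j := Is ! j - K] ! i' = {}"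
      using i len dis j by (auto simp: nth_list_update)
  next
    show "\<Union>(set (Is[j := Is ! j - K])) = U - K"
    proof
      show "\<Union>(set (Is[j := Is ! j - K])) \<subseteq> U - K"
      proof
        fix x assume "x \<in> \<Union>(set (Is[j := Is ! j - K]))"
        then obtain i where i: "i < k" "x \<in> Is[j := Is ! j - K] ! i"
          using len by (auto simp: in_set_conv_nth)
        have "x \<in> Is ! i \<and> x \<notin> K"
        proof (cases "i = j")
          case True then show ?thesis using i len j by simp
        next
          case False then show ?thesis using i len Kother[of i] by auto
        qed
        then show "x \<in> U - K" using i len un nth_mem[of i Is] by blast
      qed
      show "U - K \<subseteq> \<Union>(set (Is[j := Is ! j - K]))"
      proof
        fix x assume x: "x \<in> U - K"
        then obtain i where i: "i < k" "x \<in> Is ! i" using un len by (auto simp: in_set_conv_nth)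
        then have "x \<in> Is[j := Is ! j - K] ! i" using x len by (cases "i = j") auto
        then show "x \<in> \<Union>(set (Is[j := Is ! j - K]))" using i len by (metis UnionI length_list_update nth_mem)
      qed
    qed
  qed
qed


lemma ospU_iff:
  "Is \<in> ospU U k \<longleftrightarrow> length Is = k \<and> (\<forall>j<k. Is ! j \<noteq> {}) \<and>
      (\<forall>i<k. \<forall>j<k. i \<noteq> j \<longrightarrow> Is ! i \<inter> Is ! j = {}) \<and> (\<forall>x. x \<in> U \<longleftrightarrow> (\<exists>i<k. x \<in> Is ! i))"
proof -
  have u: "x \<in> \<Union>(set Is) \<longleftrightarrow> (\<exists>i<length Is. x \<in> Is ! i)" for x
  proof
    assume "x \<in> \<Union>(set Is)"
    then obtain X where "X \<in> set Is" "x \<in> X" by blast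
    then show "\<exists>i<length Is. x \<in> Is ! i" by (metis in_set_conv_nth)
  next
    assume "\<exists>i<length Is. x \<in> Is ! i"
    then obtain i where "i < length Is" "x \<in> Is ! i" by blast
    then show "x \<in> \<Union>(set Is)" using nth_mem by blast
  qed
  have "\<Union>(set Is) = U \<longleftrightarrow> (\<forall>x. x \<in> U \<longleftrightarrow> (\<exists>i<length Is. x \<in> Is ! i))"
    using u by blast
  then show ?thesis unfolding ospU_def by auto
qed

lemma ospU_ins:
  assumes Is: "Is \<in> ospU (U - K) m" and j: "j \<le> m" and KU: "K \<subseteq> U" "K \<noteq> {}"
  shows "ins j K Is \<in> ospU U (Suc m)" "ins j K Is ! j = K"
proof -
  have len: "length Is = m" using Is by (simp add: ospU_iff)
  note I = Is[unfolded ospU_iff]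
  have nth: "ins j K Is ! i = (if i < j then Is ! i else if i = j then K else Is ! (i - 1))" for i
    using nth_ins[of j Is K i] j len by simp
  show "ins j K Is ! j = K" by (simp add: nth)
  show "ins j K Is \<in> ospU U (Suc m)"
    unfolding ospU_iff
  proof (intro conjI allI impI)
    show "length (ins j K Is) = Suc m" using j len by simp
    fix i assume i: "i < Suc m"
    show "ins j K Is ! i \<noteq> {}"
    proof (cases "i < j")
      case True then show ?thesis using I j by (simp add: nth)
    next
      case False
      show ?thesis
      proof (cases "i = j")
        case True then show ?thesis using KU by (simp add: nth)
      next
        case False
        then have "i - 1 < m" using \<open>\<not> i < j\<close> i by simp
        then show ?thesis using I False \<open>\<not> i < j\<close> by (simp add: nth)
      qed
    qed
  next
    fix i i' assume i: "i < Suc m" "i' < Suc m" "i \<noteq> i'"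
    have sub: "Is ! l \<inter> K = {}" if "l < m" for l
      using I that by blast
    define r where "r l = (if l < j then l else l - 1)" for l
    have r: "l < Suc m \<Longrightarrow> l \<noteq> j \<Longrightarrow> r l < m \<and> ins j K Is ! l = Is ! r l" for l
      using j by (auto simp: r_def nth)
    show "ins j K Is ! i \<inter> ins j K Is ! i' = {}"
    proof (cases "i = j")
      case True
      then have "i' \<noteq> j" using i by simp
      then show ?thesis using r[OF i(2)] sub True by (auto simp: nth)
    next
      case False
      show ?thesis
      proof (cases "i' = j")
        case True then show ?thesis using r[OF i(1) False] sub by (auto simp: nth)
      next
        case False2: False
        have "r i \<noteq> r i'" using i False False2 j by (auto simp: r_def)
        then show ?thesis using r[OF i(1) False] r[OF i(2) False2] I by auto
      qed
    qed
  next
    fix x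
    show "x \<in> U \<longleftrightarrow> (\<exists>i<Suc m. x \<in> ins j K Is ! i)"
    proof
      assume x: "x \<in> U"
      show "\<exists>i<Suc m. x \<in> ins j K Is ! i"
      proof (cases "x \<in> K")
        case True then show ?thesis using j by (intro exI[of _ j]) (simp add: nth)
      next
        case False
        then obtain l where l: "l < m" "x \<in> Is ! l" using I x by blast
        show ?thesis
        proof (cases "l < j")
          case True then show ?thesis using l by (intro exI[of _ l]) (simp add: nth)
        next
          case False then show ?thesis using l by (intro exI[of _ "Suc l"]) (simp add: nth)
        qed
      qed
    next
      assume "\<exists>i<Suc m. x \<in> ins j K Is ! i"
      then obtain i where i: "i < Suc m" "x \<in> ins j K Is ! i" by blast
      show "x \<in> U"
      proof (cases "i = j")
        case True then show ?thesis using i KU by (simp add: nth subsetD)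
      next
        case False
        have "\<exists>l<m. x \<in> Is ! l"
        proof (cases "i < j")
          case True then show ?thesis using i j by (intro exI[of _ i]) (simp add: nth)
        next
          case ge: False
          then have "i - 1 < m" using i False by simp
          then show ?thesis using i ge False by (intro exI[of _ "i - 1"]) (simp add: nth)
        qed
        then show ?thesis using I by blast
      qed
    qed
  qed
qed

lemma ospU_rem:
  assumes Is: "Is \<in> ospU U (Suc m)" and j: "j \<le> m" and K: "Is ! j = K"
  shows "rem j Is \<in> ospU (U - K) m"
proof -
  note I = Is[unfolded ospU_iff]
  have len: "length Is = Suc m" using I by simp
  have nth: "rem j Is ! i = (if i < j then Is ! i else Is ! Suc i)" if "i < m" for i
    using nth_rem[of j Is i] j len that by simp
  show ?thesis
    unfolding ospU_iff
  proof (intro conjI allI impI)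
    show "length (rem j Is) = m" using j len by simp
    fix i assume i: "i < m"
    show "rem j Is ! i \<noteq> {}" using i I by (simp add: nth)
  next
    fix i i' assume i: "i < m" "i' < m" "i \<noteq> i'"
    show "rem j Is ! i \<inter> rem j Is ! i' = {}"
      using i I by (auto simp: nth)
  next
    fix x
    show "x \<in> U - K \<longleftrightarrow> (\<exists>i<m. x \<in> rem j Is ! i)"
    proof
      assume x: "x \<in> U - K"
      then obtain l where l: "l < Suc m" "x \<in> Is ! l" using I by blast
      have "l \<noteq> j" using l x K by auto
      show "\<exists>i<m. x \<in> rem j Is ! i"
      proof (cases "l < j")
        case True then show ?thesis using l j by (intro exI[of _ l]) (simp add: nth)
      next
        case False
        then have "l - 1 < m" "\<not> l - 1 < j" "Suc (l - 1) = l" using \<open>l \<noteq> j\<close> l by auto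
        then show ?thesis using l by (intro exI[of _ "l - 1"]) (simp add: nth)
      qed
    next
      assume "\<exists>i<m. x \<in> rem j Is ! i"
      then obtain i where i: "i < m" "x \<in> rem j Is ! i" by blast
      define l where "l = (if i < j then i else Suc i)"
      have l: "l < Suc m" "l \<noteq> j" "x \<in> Is ! l" using i j by (auto simp: l_def nth)
      have d: "\<forall>i<Suc m. \<forall>j'<Suc m. i \<noteq> j' \<longrightarrow> Is ! i \<inter> Is ! j' = {}" using I by simp
      have "Is ! l \<inter> Is ! j = {}" using d[rule_format, OF l(1) _ l(2)] j by simp
      then have "x \<notin> K" using l(3) K by blast
      moreover have "x \<in> U" using I l(1,3) by blast
      ultimately show "x \<in> U - K" by simp
    qed
  qed
qed


lemma TA_part:
  fixes V :: "real fps uf"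
  assumes U: "finite U" and KU: "K \<subseteq> U" "K \<noteq> {}"
  shows "(\<Sum>Is\<in>ospU U k. \<Sum>ds\<in>box g n k. tau ds * (\<Sum>j<k.
      (if K \<subseteq> Is ! j \<and> Is ! j \<noteq> K then WV V (Is ! j - K) (ds ! j + 1) else 0) *
      (\<Prod>i\<in>{..<k} - {j}. WV V (Is ! i) (ds ! i)))) = SS g n tau (U - K) V k"
proof -
  let ?W = "WV V"
  have "(\<Sum>Is\<in>ospU U k. \<Sum>ds\<in>box g n k. tau ds * (\<Sum>j<k.
      (if K \<subseteq> Is ! j \<and> Is ! j \<noteq> K then ?W (Is ! j - K) (ds ! j + 1) else 0) *
      (\<Prod>i\<in>{..<k} - {j}. ?W (Is ! i) (ds ! i)))) =
    (\<Sum>j<k. \<Sum>Is\<in>ospU U k. \<Sum>ds\<in>box g n k. tau ds *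
      ((if K \<subseteq> Is ! j \<and> Is ! j \<noteq> K then ?W (Is ! j - K) (ds ! j + 1) else 0) *
      (\<Prod>i\<in>{..<k} - {j}. ?W (Is ! i) (ds ! i))))"
    by (simp add: sum_distrib_left sum.swap[of _ "{..<k}"])
  also have "\<dots> = (\<Sum>j<k. \<Sum>Is\<in>ospU (U - K) k. \<Sum>ds\<in>box g n k.
      tau ds * ?W (Is ! j) (ds ! j + 1) * (\<Prod>i\<in>{..<k} - {j}. ?W (Is ! i) (ds ! i)))"
  proof (rule sum.cong[OF refl])
    fix j assume j: "j \<in> {..<k}"
    let ?h = "\<lambda>Is. \<Sum>ds\<in>box g n k. tau ds * ?W (Is ! j) (ds ! j + 1) * (\<Prod>i\<in>{..<k} - {j}. ?W (Is ! i) (ds ! i))"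
    let ?P = "\<lambda>Is. K \<subseteq> Is ! j \<and> Is ! j \<noteq> K"
    have "(\<Sum>Is\<in>ospU U k. \<Sum>ds\<in>box g n k. tau ds *
      ((if ?P Is then ?W (Is ! j - K) (ds ! j + 1) else 0) * (\<Prod>i\<in>{..<k} - {j}. ?W (Is ! i) (ds ! i))))
      = (\<Sum>Is\<in>ospU U k. if ?P Is then ?h (Is[j := Is ! j - K]) else 0)"
    proof (rule sum.cong[OF refl])
      fix Is assume Is: "Is \<in> ospU U k"
      have len: "length Is = k" using Is by (simp add: ospU_def)
      show "(\<Sum>ds\<in>box g n k. tau ds *
        ((if ?P Is then ?W (Is ! j - K) (ds ! j + 1) else 0) * (\<Prod>i\<in>{..<k} - {j}. ?W (Is ! i) (ds ! i))))
        = (if ?P Is then ?h (Is[j := Is ! j - K]) else 0)"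
      proof (cases "?P Is")
        case True
        have pr: "(\<Prod>i\<in>{..<k} - {j}. ?W (Is[j := Is ! j - K] ! i) (ds ! i)) = (\<Prod>i\<in>{..<k} - {j}. ?W (Is ! i) (ds ! i))" for ds
          by (rule prod.cong[OF refl]) simp
        show ?thesis using True j len by (simp add: pr mult.assoc)
      next
        case False
        then show ?thesis by (simp only: if_False mult_zero_left mult_zero_right sum.neutral_const)
      qed
    qed
    also have "\<dots> = (\<Sum>Is\<in>{Is \<in> ospU U k. ?P Is}. ?h (Is[j := Is ! j - K]))"
      by (rule sum.inter_filter[symmetric, OF finite_ospU[OF U]])
    also have "\<dots> = (\<Sum>Is\<in>ospU (U - K) k. ?h Is)"
    proof (rule sum.reindex_bij_witness[of _ "\<lambda>Is. Is[j := Is ! j \<union> K]" "\<lambda>Is. Is[j := Is ! j - K]"])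
      fix Is assume Is: "Is \<in> {Is \<in> ospU U k. ?P Is}"
      have len: "length Is = k" using Is by (simp add: ospU_def)
      show "(Is[j := Is ! j - K])[j := (Is[j := Is ! j - K]) ! j \<union> K] = Is"
        using Is j len by (auto simp: Un_absorb2 intro!: nth_equalityI)
      show "Is[j := Is ! j - K] \<in> ospU (U - K) k"
        using ospU_upd_diff[of Is U k j K] Is j by auto
      show "?h (Is[j := Is ! j - K]) = ?h (Is[j := Is ! j - K])" ..
    next
      fix Is assume Is: "Is \<in> ospU (U - K) k"
      note a = ospU_upd_add[OF Is _ KU(1)]
      have len: "length Is = k" using Is by (simp add: ospU_def)
      show "(Is[j := Is ! j \<union> K])[j := (Is[j := Is ! j \<union> K]) ! j - K] = Is"
        using a(4)[of j] j len by simp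
      show "Is[j := Is ! j \<union> K] \<in> {Is \<in> ospU U k. ?P Is}"
        using a(1-3)[of j] j by simp
    qed
    finally show "(\<Sum>Is\<in>ospU U k. \<Sum>ds\<in>box g n k. tau ds *
      ((if ?P Is then ?W (Is ! j - K) (ds ! j + 1) else 0) * (\<Prod>i\<in>{..<k} - {j}. ?W (Is ! i) (ds ! i))))
      = (\<Sum>Is\<in>ospU (U - K) k. ?h Is)" .
  qed
  also have "\<dots> = SS g n tau (U - K) V k" by (simp add: SS_def)
  finally show ?thesis .
qed


lemma sum_Is_ins:
  assumes U: "finite U" and j: "j \<le> m" and KU: "K \<subseteq> U" "K \<noteq> {}"
  shows "(\<Sum>Is\<in>ospU U (Suc m). if Is ! j = K then F Is else 0) = (\<Sum>Is\<in>ospU (U - K) m. F (ins j K Is))"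
proof -
  have "(\<Sum>Is\<in>ospU U (Suc m). if Is ! j = K then F Is else 0) = (\<Sum>Is\<in>{Is \<in> ospU U (Suc m). Is ! j = K}. F Is)"
    by (rule sum.inter_filter[symmetric, OF finite_ospU[OF U]])
  also have "\<dots> = (\<Sum>Is\<in>ospU (U - K) m. F (ins j K Is))"
  proof (rule sum.reindex_bij_witness[of _ "ins j K" "rem j"])
    fix Is assume Is: "Is \<in> {Is \<in> ospU U (Suc m). Is ! j = K}"
    have len: "length Is = Suc m" using Is by (simp add: ospU_def)
    show "ins j K (rem j Is) = Is" using ins_rem[of j Is] Is len j by simp
    show "rem j Is \<in> ospU (U - K) m" using ospU_rem[of Is U m j K] Is j by simp
    show "F (ins j K (rem j Is)) = F Is" using ins_rem[of j Is] Is len j by simp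
  next
    fix Is assume Is: "Is \<in> ospU (U - K) m"
    have len: "length Is = m" using Is by (simp add: ospU_def)
    show "rem j (ins j K Is) = Is" using rem_ins[of j Is K] len j by simp
    show "ins j K Is \<in> {Is \<in> ospU U (Suc m). Is ! j = K}" using ospU_ins[OF Is j KU] by simp
  qed
  finally show ?thesis .
qed

lemma sum_ds_ins:
  assumes j: "j \<le> m"
  shows "(\<Sum>ds\<in>box g n (Suc m). if ds ! j = 0 then G ds else 0) =
    (\<Sum>ds\<in>boxS (int g - 1 + int m) (\<lambda>_. - int n) m. G (ins j 0 ds))"
proof -
  have fin: "finite (box g n (Suc m))" by (rule finite_boxS[of "- int n"]) simp
  have "(\<Sum>ds\<in>box g n (Suc m). if ds ! j = 0 then G ds else 0) = (\<Sum>ds\<in>{ds \<in> box g n (Suc m). ds ! j = 0}. G ds)"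
    by (rule sum.inter_filter[symmetric, OF fin])
  also have "\<dots> = (\<Sum>ds\<in>boxS (int g - 1 + int m) (\<lambda>_. - int n) m. G (ins j 0 ds))"
  proof (rule sum.reindex_bij_witness[of _ "ins j 0" "rem j"])
    fix ds assume ds: "ds \<in> {ds \<in> box g n (Suc m). ds ! j = 0}"
    have len: "length ds = Suc m" using ds by (simp add: boxS_def)
    have ir: "ins j 0 (rem j ds) = ds" using ins_rem[of j ds] ds len j by simp
    show "ins j 0 (rem j ds) = ds" by (rule ir)
    show "G (ins j 0 (rem j ds)) = G ds" using ir by simp
    have "sum_list ds = sum_list (rem j ds)" using sum_list_ins[of j 0 "rem j ds"] ir by simp
    moreover have "\<forall>i<m. - int n \<le> rem j ds ! i"
      using ds len j by (auto simp: boxS_def nth_rem)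
    ultimately show "rem j ds \<in> boxS (int g - 1 + int m) (\<lambda>_. - int n) m"
      using ds len j by (simp add: boxS_def)
  next
    fix ds assume ds: "ds \<in> boxS (int g - 1 + int m) (\<lambda>_. - int n) m"
    have len: "length ds = m" using ds by (simp add: boxS_def)
    show "rem j (ins j 0 ds) = ds" using rem_ins[of j ds] len j by simp
    have "\<forall>i<Suc m. - int n \<le> ins j 0 ds ! i"
      using ds len j by (auto simp: boxS_def nth_ins)
    moreover have "ins j 0 ds ! j = 0" using len j by (simp add: nth_ins)
    ultimately show "ins j 0 ds \<in> {ds \<in> box g n (Suc m). ds ! j = 0}"
      using ds len j by (simp add: boxS_def sum_list_ins)
  qed
  finally show ?thesis .
qed


lemma sum_list_upd_int:
  assumes "j < length xs"
  shows "sum_list (xs[j := x]) = sum_list xs - xs ! j + (x :: int)"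
proof -
  have a: "sum_list xs = sum_list (take j xs @ xs ! j # drop (Suc j) xs)"
    using id_take_nth_drop[OF assms] by simp
  have b: "xs[j := x] = take j xs @ x # drop (Suc j) xs" by (rule upd_conv_take_nth_drop[OF assms])
  show ?thesis unfolding b using a by simp
qed

lemma WV_low: "card I \<le> n \<Longrightarrow> d \<le> - int n \<Longrightarrow> WV V I d = 0"
  by (simp add: WV_def)

lemma sum_es_shift:
  assumes j: "j < m" and Is: "Is \<in> ospU U' m" and cU: "finite U'" "card U' \<le> n"
  shows "(\<Sum>ds\<in>boxS (int g - 1 + int m) (\<lambda>_. - int n) m. tau (ds[j := ds ! j - 1]) * (\<Prod>i<m. WV V (Is ! i) (ds ! i)))
    = (\<Sum>es\<in>box g n m. tau es * WV V (Is ! j) (es ! j + 1) * (\<Prod>i\<in>{..<m} - {j}. WV V (Is ! i) (es ! i)))"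
proof -
  define lo where "lo i = (if i = j then - int n - 1 else - int n)" for i
  let ?f = "\<lambda>es. tau es * WV V (Is ! j) (es ! j + 1) * (\<Prod>i\<in>{..<m} - {j}. WV V (Is ! i) (es ! i))"
  have lenIs: "length Is = m" using Is by (simp add: ospU_def)
  have "(\<Sum>ds\<in>boxS (int g - 1 + int m) (\<lambda>_. - int n) m. tau (ds[j := ds ! j - 1]) * (\<Prod>i<m. WV V (Is ! i) (ds ! i)))
      = (\<Sum>es\<in>boxS (int g - 2 + int m) lo m. ?f es)"
  proof (rule sum.reindex_bij_witness[of _ "\<lambda>es. es[j := es ! j + 1]" "\<lambda>ds. ds[j := ds ! j - 1]"])
    fix ds assume ds: "ds \<in> boxS (int g - 1 + int m) (\<lambda>_. - int n) m"
    have len: "length ds = m" using ds by (simp add: boxS_def)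
    show "(ds[j := ds ! j - 1])[j := (ds[j := ds ! j - 1]) ! j + 1] = ds" using len j by simp
    have "sum_list (ds[j := ds ! j - 1]) = int g - 2 + int m"
      using ds len j by (simp add: sum_list_upd_int boxS_def)
    moreover have "\<forall>i<m. lo i \<le> ds[j := ds ! j - 1] ! i"
      using ds len j by (auto simp: boxS_def lo_def nth_list_update)
    ultimately show "ds[j := ds ! j - 1] \<in> boxS (int g - 2 + int m) lo m"
      using len by (simp add: boxS_def)
    have pr: "(\<Prod>i<m. WV V (Is ! i) (ds ! i)) = WV V (Is ! j) (ds ! j) * (\<Prod>i\<in>{..<m} - {j}. WV V (Is ! i) (ds ! i))"
      using j by (simp add: prod.remove[of "{..<m}" j])
    have pr2: "(\<Prod>i\<in>{..<m} - {j}. WV V (Is ! i) (ds[j := ds ! j - 1] ! i)) = (\<Prod>i\<in>{..<m} - {j}. WV V (Is ! i) (ds ! i))"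
      by (rule prod.cong[OF refl]) simp
    show "?f (ds[j := ds ! j - 1]) = tau (ds[j := ds ! j - 1]) * (\<Prod>i<m. WV V (Is ! i) (ds ! i))"
      using len j by (simp add: pr pr2 mult.assoc)
  next
    fix es assume es: "es \<in> boxS (int g - 2 + int m) lo m"
    have len: "length es = m" using es by (simp add: boxS_def)
    show "(es[j := es ! j + 1])[j := (es[j := es ! j + 1]) ! j - 1] = es" using len j by simp
    have "sum_list (es[j := es ! j + 1]) = int g - 1 + int m"
      using es len j by (simp add: sum_list_upd_int boxS_def)
    moreover have "\<forall>i<m. - int n \<le> es[j := es ! j + 1] ! i"
    proof (intro allI impI)
      fix i assume i: "i < m"
      have "lo i \<le> es ! i" using es i by (simp add: boxS_def)
      then show "- int n \<le> es[j := es ! j + 1] ! i" using i len by (auto simp: lo_def nth_list_update split: if_splits)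
    qed
    ultimately show "es[j := es ! j + 1] \<in> boxS (int g - 1 + int m) (\<lambda>_. - int n) m"
      using len by (simp add: boxS_def)
  qed
  also have "\<dots> = (\<Sum>es\<in>box g n m. ?f es)"
  proof (rule sum.mono_neutral_right)
    show "finite (boxS (int g - 2 + int m) lo m)" by (rule finite_boxS[of "- int n - 1"]) (simp add: lo_def)
    show "box g n m \<subseteq> boxS (int g - 2 + int m) lo m" by (auto simp: boxS_def lo_def)
    show "\<forall>es\<in>boxS (int g - 2 + int m) lo m - box g n m. ?f es = 0"
    proof
      fix es assume es: "es \<in> boxS (int g - 2 + int m) lo m - box g n m"
      then obtain i where i: "i < m" "es ! i < - int n" by (auto simp: boxS_def not_le)
      have "lo i \<le> es ! i" using es i(1) by (simp add: boxS_def)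
      then have "i = j" using i(2) by (cases "i = j") (simp_all add: lo_def)
      then have ej: "es ! j + 1 \<le> - int n" using i by simp
      have "Is ! j \<in> set Is" using j lenIs by simp
      then have "Is ! j \<subseteq> U'" using Is by (auto simp: ospU_def)
      then have "card (Is ! j) \<le> card U'" by (rule card_mono[OF cU(1)])
      then have "card (Is ! j) \<le> n" using cU(2) by simp
      then have "WV V (Is ! j) (es ! j + 1) = 0" using ej by (rule WV_low)
      then show "?f es = 0" by simp
    qed
  qed
  finally show ?thesis .
qed


lemma TB_part:
  fixes V :: "real fps uf"
  assumes U: "finite U" "card U \<le> n" and KU: "K \<subseteq> U" "K \<noteq> {}"
    and ss: "string_system g tau" and g: "2 \<le> g" and k: "1 \<le> k"
  shows "(\<Sum>Is\<in>ospU U k. \<Sum>ds\<in>box g n k. tau ds * (\<Sum>j<k.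
      (if Is ! j = K \<and> ds ! j = 0 then 1 else 0) * (\<Prod>i\<in>{..<k} - {j}. WV V (Is ! i) (ds ! i))))
    = real k * SS g n tau (U - K) V (k - 1)"
proof (cases "k = 1")
  case True
  have "tau ds * (\<Sum>j<k. (if Is ! j = K \<and> ds ! j = 0 then 1 else 0) * (\<Prod>i\<in>{..<k} - {j}. WV V (Is ! i) (ds ! i))) = 0"
    if ds: "ds \<in> box g n k" for Is :: "nat set list" and ds
  proof -
    obtain d where d: "ds = [d]" using ds True by (auto simp: boxS_def length_Suc_conv)
    then have "d = int g - 1" using ds True by (simp add: boxS_def)
    then have "ds ! 0 \<noteq> 0" using d g by simp
    then show ?thesis using True by simp
  qed
  then have "(\<Sum>Is\<in>ospU U k. \<Sum>ds\<in>box g n k. tau ds * (\<Sum>j<k.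
      (if Is ! j = K \<and> ds ! j = 0 then 1 else 0) * (\<Prod>i\<in>{..<k} - {j}. WV V (Is ! i) (ds ! i)))) = 0"
    by (intro sum.neutral ballI)
  then show ?thesis using True by (simp add: SS_def)
next
  case False
  define m where "m = k - 1"
  have m: "k = Suc m" "1 \<le> m" using k False by (simp_all add: m_def)
  let ?W = "WV V"
  define R where "R = (\<Sum>Is\<in>ospU (U - K) m. \<Sum>ds\<in>boxS (int g - 1 + int m) (\<lambda>_. - int n) m.
      tau (ds @ [0]) * (\<Prod>i<m. ?W (Is ! i) (ds ! i)))"
  have sym: "tau (ins j 0 ds) = tau (ds @ [0])" if ds: "ds \<in> boxS (int g - 1 + int m) (\<lambda>_. - int n) m" and j: "j \<le> m" for j ds
  proof -
    have len: "length ds = m" using ds by (simp add: boxS_def)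
    have "corr_dom g (ins j 0 ds)" using ds len j by (simp add: corr_dom_def boxS_def sum_list_ins)
    moreover have "mset (ins j 0 ds) = mset (ds @ [0])" by (simp add: mset_ins)
    ultimately show ?thesis using ss unfolding string_system_def by blast
  qed
  have "(\<Sum>Is\<in>ospU U k. \<Sum>ds\<in>box g n k. tau ds * (\<Sum>j<k.
      (if Is ! j = K \<and> ds ! j = 0 then 1 else 0) * (\<Prod>i\<in>{..<k} - {j}. ?W (Is ! i) (ds ! i))))
    = (\<Sum>j<k. \<Sum>Is\<in>ospU U (Suc m). if Is ! j = K then (\<Sum>ds\<in>box g n (Suc m).
         if ds ! j = 0 then tau ds * (\<Prod>i\<in>{..<Suc m} - {j}. ?W (Is ! i) (ds ! i)) else 0) else 0)"
  proof -
    have "(\<Sum>Is\<in>ospU U k. \<Sum>ds\<in>box g n k. tau ds * (\<Sum>j<k.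
      (if Is ! j = K \<and> ds ! j = 0 then 1 else 0) * (\<Prod>i\<in>{..<k} - {j}. ?W (Is ! i) (ds ! i))))
      = (\<Sum>Is\<in>ospU U k. \<Sum>ds\<in>box g n k. \<Sum>j<k. tau ds *
      ((if Is ! j = K \<and> ds ! j = 0 then 1 else 0) * (\<Prod>i\<in>{..<k} - {j}. ?W (Is ! i) (ds ! i))))"
      by (simp only: sum_distrib_left)
    also have "\<dots> = (\<Sum>Is\<in>ospU U k. \<Sum>j<k. \<Sum>ds\<in>box g n k. tau ds *
      ((if Is ! j = K \<and> ds ! j = 0 then 1 else 0) * (\<Prod>i\<in>{..<k} - {j}. ?W (Is ! i) (ds ! i))))"
      by (rule sum.cong[OF refl], rule sum.swap)
    also have "\<dots> = (\<Sum>j<k. \<Sum>Is\<in>ospU U k. \<Sum>ds\<in>box g n k. tau ds *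
      ((if Is ! j = K \<and> ds ! j = 0 then 1 else 0) * (\<Prod>i\<in>{..<k} - {j}. ?W (Is ! i) (ds ! i))))"
      by (rule sum.swap)
    also have "\<dots> = (\<Sum>j<k. \<Sum>Is\<in>ospU U (Suc m). if Is ! j = K then (\<Sum>ds\<in>box g n (Suc m).
         if ds ! j = 0 then tau ds * (\<Prod>i\<in>{..<Suc m} - {j}. ?W (Is ! i) (ds ! i)) else 0) else 0)"
      unfolding m(1)
    proof (rule sum.cong[OF refl], rule sum.cong[OF refl])
      fix j Is
      show "(\<Sum>ds\<in>box g n (Suc m). tau ds *
          ((if Is ! j = K \<and> ds ! j = 0 then 1 else 0) * (\<Prod>i\<in>{..<Suc m} - {j}. ?W (Is ! i) (ds ! i)))) =
        (if Is ! j = K then \<Sum>ds\<in>box g n (Suc m).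
           if ds ! j = 0 then tau ds * (\<Prod>i\<in>{..<Suc m} - {j}. ?W (Is ! i) (ds ! i)) else 0 else 0)"
        by (cases "Is ! j = K") (auto intro!: sum.cong)
    qed
    finally show ?thesis .
  qed
  also have "\<dots> = (\<Sum>j<k. R)"
  proof (rule sum.cong[OF refl])
    fix j assume "j \<in> {..<k}"
    then have j: "j \<le> m" using m by simp
    have "(\<Sum>Is\<in>ospU U (Suc m). if Is ! j = K then (\<Sum>ds\<in>box g n (Suc m).
         if ds ! j = 0 then tau ds * (\<Prod>i\<in>{..<Suc m} - {j}. ?W (Is ! i) (ds ! i)) else 0) else 0)
      = (\<Sum>Is\<in>ospU (U - K) m. \<Sum>ds\<in>box g n (Suc m).
         if ds ! j = 0 then tau ds * (\<Prod>i\<in>{..<Suc m} - {j}. ?W (ins j K Is ! i) (ds ! i)) else 0)"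
      by (rule sum_Is_ins[OF U(1) j KU])
    also have "\<dots> = (\<Sum>Is\<in>ospU (U - K) m. \<Sum>ds\<in>boxS (int g - 1 + int m) (\<lambda>_. - int n) m.
         tau (ins j 0 ds) * (\<Prod>i\<in>{..<Suc m} - {j}. ?W (ins j K Is ! i) (ins j 0 ds ! i)))"
      by (rule sum.cong[OF refl]) (rule sum_ds_ins[OF j])
    also have "\<dots> = R" unfolding R_def
    proof (rule sum.cong[OF refl])+
      fix Is ds assume Is: "Is \<in> ospU (U - K) m" and ds: "ds \<in> boxS (int g - 1 + int m) (\<lambda>_. - int n) m"
      have "length Is = m" "length ds = m" using Is ds by (simp_all add: ospU_def boxS_def)
      then show "tau (ins j 0 ds) * (\<Prod>i\<in>{..<Suc m} - {j}. ?W (ins j K Is ! i) (ins j 0 ds ! i)) =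
          tau (ds @ [0]) * (\<Prod>i<m. ?W (Is ! i) (ds ! i))"
        using sym[OF ds j] prod_ins_reindex[OF j, of Is ds ?W K 0] by simp
    qed
    finally show "(\<Sum>Is\<in>ospU U (Suc m). if Is ! j = K then (\<Sum>ds\<in>box g n (Suc m).
         if ds ! j = 0 then tau ds * (\<Prod>i\<in>{..<Suc m} - {j}. ?W (Is ! i) (ds ! i)) else 0) else 0) = R" .
  qed
  also have "\<dots> = real k * R" by simp
  also have "R = SS g n tau (U - K) V m"
  proof -
    have "R = (\<Sum>Is\<in>ospU (U - K) m. \<Sum>ds\<in>boxS (int g - 1 + int m) (\<lambda>_. - int n) m.
        \<Sum>j<m. tau (ds[j := ds ! j - 1]) * (\<Prod>i<m. ?W (Is ! i) (ds ! i)))"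
      unfolding R_def
    proof (rule sum.cong[OF refl])+
      fix Is ds assume ds: "ds \<in> boxS (int g - 1 + int m) (\<lambda>_. - int n) m"
      have len: "length ds = m" using ds by (simp add: boxS_def)
      have "tau (ds @ [0]) = (\<Sum>j<length ds. tau (ds[j := ds ! j - 1]))"
        using ss ds len m(2) unfolding string_system_def by (simp add: boxS_def)
      then show "tau (ds @ [0]) * (\<Prod>i<m. ?W (Is ! i) (ds ! i)) =
          (\<Sum>j<m. tau (ds[j := ds ! j - 1]) * (\<Prod>i<m. ?W (Is ! i) (ds ! i)))"
        using len by (simp add: sum_distrib_right)
    qed
    also have "\<dots> = (\<Sum>Is\<in>ospU (U - K) m. \<Sum>j<m. \<Sum>ds\<in>boxS (int g - 1 + int m) (\<lambda>_. - int n) m.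
        tau (ds[j := ds ! j - 1]) * (\<Prod>i<m. ?W (Is ! i) (ds ! i)))"
      by (rule sum.cong[OF refl]) (rule sum.swap)
    also have "\<dots> = (\<Sum>Is\<in>ospU (U - K) m. \<Sum>j<m. \<Sum>es\<in>box g n m.
        tau es * ?W (Is ! j) (es ! j + 1) * (\<Prod>i\<in>{..<m} - {j}. ?W (Is ! i) (es ! i)))"
    proof (rule sum.cong[OF refl])+
      fix Is j assume Is: "Is \<in> ospU (U - K) m" and j: "j \<in> {..<m}"
      have cU: "finite (U - K)" "card (U - K) \<le> n"
        using U by (auto intro: order_trans[OF card_mono[OF U(1)]])
      show "(\<Sum>ds\<in>boxS (int g - 1 + int m) (\<lambda>_. - int n) m. tau (ds[j := ds ! j - 1]) * (\<Prod>i<m. ?W (Is ! i) (ds ! i)))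
          = (\<Sum>es\<in>box g n m. tau es * ?W (Is ! j) (es ! j + 1) * (\<Prod>i\<in>{..<m} - {j}. ?W (Is ! i) (es ! i)))"
        by (rule sum_es_shift) (use j Is cU in auto)
    qed
    also have "\<dots> = SS g n tau (U - K) V m"
      unfolding SS_def by (rule sum.swap)
    finally show ?thesis .
  qed
  finally show ?thesis using m by simp
qed


definition EE :: "nat \<Rightarrow> nat \<Rightarrow> (int list \<Rightarrow> real) \<Rightarrow> nat set \<Rightarrow> real fps uf \<Rightarrow> real" where
  "EE g n tau U V = (\<Sum>k\<in>{1..n}. (-1) ^ k / fact k *
     (\<Sum>Is\<in>ospU U k. \<Sum>ds\<in>box g n k. tau ds * (\<Prod>j<k. WV V (Is ! j) (ds ! j))))"

lemma telescope:
  fixes S :: "nat \<Rightarrow> real"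
  shows "(\<Sum>k\<in>{1..N}. (-1) ^ k / fact k * (S k + real k * S (k - 1))) = (-1) ^ N / fact N * S N - S 0"
proof (induction N)
  case 0 then show ?case by simp
next
  case (Suc N)
  have "(\<Sum>k\<in>{1..Suc N}. (-1) ^ k / fact k * (S k + real k * S (k - 1))) =
      (\<Sum>k\<in>{1..N}. (-1) ^ k / fact k * (S k + real k * S (k - 1))) +
      (-1) ^ Suc N / fact (Suc N) * (S (Suc N) + real (Suc N) * S N)"
    by simp
  also have "(-1) ^ Suc N / fact (Suc N) * (real (Suc N) * S N) = - ((-1) ^ N / fact N * S N)"
    by (simp add: fact_Suc field_simps del: of_nat_Suc)
  then have "(-1) ^ Suc N / fact (Suc N) * (S (Suc N) + real (Suc N) * S N) =
      (-1) ^ Suc N / fact (Suc N) * S (Suc N) - (-1) ^ N / fact N * S N"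
    by (simp add: distrib_left)
  finally show ?case using Suc.IH by simp
qed

lemma EE_step:
  fixes V :: "real fps uf"
  assumes U: "finite U" "card U \<le> n" and KU: "K \<subseteq> U" "K \<noteq> {}"
    and ss: "string_system g tau" and g: "2 \<le> g" and V0: "ufc V {} = 1"
  shows "EE g n tau U (fac K s * V) = EE g n tau U V"
proof -
  let ?W = "WV V"
  have fK: "finite K" using KU U finite_subset by blast
  define cA where "cA I d = (if K \<subseteq> I \<and> I \<noteq> K then ?W (I - K) (d + 1) else 0)" for I d
  define cB where "cB I d = (if I = K \<and> d = (0::int) then 1 else (0::real))" for I d
  have cK_split: "cK V K I d = cA I d + cB I d" for I d
    by (auto simp: cK_def cA_def cB_def)
  define S where "S m = SS g n tau (U - K) V m" for m
  have inner: "(\<Sum>Is\<in>ospU U k. \<Sum>ds\<in>box g n k. tau ds * (\<Prod>j<k. WV (fac K s * V) (Is ! j) (ds ! j))) =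
      (\<Sum>Is\<in>ospU U k. \<Sum>ds\<in>box g n k. tau ds * (\<Prod>j<k. ?W (Is ! j) (ds ! j))) + s * (S k + real k * S (k - 1))"
    if k: "1 \<le> k" for k
  proof -
    have pt: "tau ds * (\<Prod>j<k. WV (fac K s * V) (Is ! j) (ds ! j)) =
        tau ds * (\<Prod>j<k. ?W (Is ! j) (ds ! j)) + s * (
        tau ds * (\<Sum>j<k. cA (Is ! j) (ds ! j) * (\<Prod>i\<in>{..<k} - {j}. ?W (Is ! i) (ds ! i))) +
        tau ds * (\<Sum>j<k. cB (Is ! j) (ds ! j) * (\<Prod>i\<in>{..<k} - {j}. ?W (Is ! i) (ds ! i))))"
      if Is: "Is \<in> ospU U k" for Is ds
    proof -
      have len: "length Is = k" using Is by (simp add: ospU_def)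
      have finb: "finite (Is ! j)" if "j < k" for j
      proof -
        have "Is ! j \<in> set Is" using that len by simp
        then have "Is ! j \<subseteq> U" using Is by (auto simp: ospU_def)
        then show ?thesis using U(1) finite_subset by blast
      qed
      have "(\<Prod>j<k. WV (fac K s * V) (Is ! j) (ds ! j)) = (\<Prod>j<k. ?W (Is ! j) (ds ! j) + s * cK V K (Is ! j) (ds ! j))"
        by (rule prod.cong[OF refl]) (simp add: WV_fac[OF fK KU(2) finb V0])
      also have "\<dots> = (\<Prod>j<k. ?W (Is ! j) (ds ! j)) +
          (\<Sum>j<k. s * cK V K (Is ! j) (ds ! j) * (\<Prod>i\<in>{..<k} - {j}. ?W (Is ! i) (ds ! i)))"
      proof (rule prod_add_single)
        fix i j assume ij: "i \<in> {..<k}" "j \<in> {..<k}" "i \<noteq> j"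
        have "Is ! i \<inter> Is ! j = {}" using Is ij by (simp add: ospU_def)
        then have "\<not> (K \<subseteq> Is ! i \<and> K \<subseteq> Is ! j)" using KU(2) by blast
        then show "s * cK V K (Is ! i) (ds ! i) * (s * cK V K (Is ! j) (ds ! j)) = 0"
          by (auto simp: cK_def)
      qed simp
      finally show ?thesis
        by (simp add: cK_split distrib_left distrib_right sum.distrib sum_distrib_left mult.assoc mult.left_commute)
    qed
    have "(\<Sum>Is\<in>ospU U k. \<Sum>ds\<in>box g n k. tau ds * (\<Prod>j<k. WV (fac K s * V) (Is ! j) (ds ! j))) =
      (\<Sum>Is\<in>ospU U k. \<Sum>ds\<in>box g n k. tau ds * (\<Prod>j<k. ?W (Is ! j) (ds ! j))) + s * (
      (\<Sum>Is\<in>ospU U k. \<Sum>ds\<in>box g n k. tau ds * (\<Sum>j<k. cA (Is ! j) (ds ! j) * (\<Prod>i\<in>{..<k} - {j}. ?W (Is ! i) (ds ! i)))) +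
      (\<Sum>Is\<in>ospU U k. \<Sum>ds\<in>box g n k. tau ds * (\<Sum>j<k. cB (Is ! j) (ds ! j) * (\<Prod>i\<in>{..<k} - {j}. ?W (Is ! i) (ds ! i)))))"
    proof -
      let ?A = "\<lambda>Is ds. tau ds * (\<Sum>j<k. cA (Is ! j) (ds ! j) * (\<Prod>i\<in>{..<k} - {j}. ?W (Is ! i) (ds ! i)))"
      let ?B = "\<lambda>Is ds. tau ds * (\<Sum>j<k. cB (Is ! j) (ds ! j) * (\<Prod>i\<in>{..<k} - {j}. ?W (Is ! i) (ds ! i)))"
      let ?O = "\<lambda>Is ds. tau ds * (\<Prod>j<k. ?W (Is ! j) (ds ! j))"
      have "(\<Sum>Is\<in>ospU U k. \<Sum>ds\<in>box g n k. tau ds * (\<Prod>j<k. WV (fac K s * V) (Is ! j) (ds ! j))) =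
          (\<Sum>Is\<in>ospU U k. \<Sum>ds\<in>box g n k. ?O Is ds + s * (?A Is ds + ?B Is ds))"
        by (intro sum.cong refl) (rule pt)
      also have "\<dots> = (\<Sum>Is\<in>ospU U k. \<Sum>ds\<in>box g n k. ?O Is ds) +
          s * ((\<Sum>Is\<in>ospU U k. \<Sum>ds\<in>box g n k. ?A Is ds) + (\<Sum>Is\<in>ospU U k. \<Sum>ds\<in>box g n k. ?B Is ds))"
        by (simp only: sum.distrib distrib_left sum_distrib_left)
      finally show ?thesis .
    qed
    also have "(\<Sum>Is\<in>ospU U k. \<Sum>ds\<in>box g n k. tau ds * (\<Sum>j<k. cA (Is ! j) (ds ! j) * (\<Prod>i\<in>{..<k} - {j}. ?W (Is ! i) (ds ! i)))) = S k"
      unfolding cA_def S_def by (rule TA_part[OF U(1) KU])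
    also have "(\<Sum>Is\<in>ospU U k. \<Sum>ds\<in>box g n k. tau ds * (\<Sum>j<k. cB (Is ! j) (ds ! j) * (\<Prod>i\<in>{..<k} - {j}. ?W (Is ! i) (ds ! i)))) = real k * S (k - 1)"
      unfolding cB_def S_def by (rule TB_part[OF U KU ss g k])
    finally show ?thesis .
  qed
  have "EE g n tau U (fac K s * V) = EE g n tau U V + s * (\<Sum>k\<in>{1..n}. (-1) ^ k / fact k * (S k + real k * S (k - 1)))"
  proof -
    let ?X = "\<lambda>k. \<Sum>Is\<in>ospU U k. \<Sum>ds\<in>box g n k. tau ds * (\<Prod>j<k. ?W (Is ! j) (ds ! j))"
    have "EE g n tau U (fac K s * V) = (\<Sum>k\<in>{1..n}. (-1) ^ k / fact k * (?X k + s * (S k + real k * S (k - 1))))"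
      unfolding EE_def by (rule sum.cong[OF refl]) (simp only: inner atLeastAtMost_iff)
    also have "\<dots> = (\<Sum>k\<in>{1..n}. (-1) ^ k / fact k * ?X k) + s * (\<Sum>k\<in>{1..n}. (-1) ^ k / fact k * (S k + real k * S (k - 1)))"
      by (simp only: distrib_left sum.distrib sum_distrib_left mult.left_commute)
    finally show ?thesis unfolding EE_def .
  qed
  also have "(\<Sum>k\<in>{1..n}. (-1) ^ k / fact k * (S k + real k * S (k - 1))) = (-1) ^ n / fact n * S n - S 0"
    by (rule telescope)
  also have "S 0 = 0" by (simp add: S_def SS_def)
  also have "S n = 0"
  proof -
    have "card K \<ge> 1" using KU fK by (simp add: Suc_leI card_gt_0_iff)
    moreover have "card K \<le> card U" using card_mono[OF U(1) KU(1)] .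
    moreover have "card (U - K) = card U - card K" using card_Diff_subset[OF fK KU(1)] .
    ultimately have "card (U - K) < n" using U(2) by linarith
    then have "ospU (U - K) n = {}" using ospU_card[of "U - K" _ n] U by force
    then show ?thesis by (simp add: S_def SS_def)
  qed
  finally show ?thesis by simp
qed


lemma EE_agree:
  assumes "agree U V V'"
  shows "EE g n tau U V = EE g n tau U V'"
proof -
  have "WV V (Is ! j) d = WV V' (Is ! j) d" if "Is \<in> ospU U k" "j < k" for Is k j d
  proof -
    have "Is ! j \<in> set Is" using that by (simp add: ospU_def)
    then have "Is ! j \<subseteq> U" using that by (auto simp: ospU_def)
    then show ?thesis using assms by (simp add: agree_def WV_def)
  qed
  then show ?thesis unfolding EE_def
    by (intro sum.cong refl arg_cong2[where f="(*)"] prod.cong) auto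
qed

lemma EE_step':
  fixes V :: "real fps uf"
  assumes U: "finite U" "card U \<le> n" and K: "finite K" "K \<noteq> {}"
    and ss: "string_system g tau" and g: "2 \<le> g" and V0: "ufc V {} = 1"
  shows "EE g n tau U (fac K s * V) = EE g n tau U V"
proof (cases "K \<subseteq> U")
  case True then show ?thesis using EE_step[OF U True K(2) ss g V0] by simp
next
  case False
  have "agree U (fac K s * V) V"
    unfolding agree_def
  proof (intro allI impI)
    fix I assume I: "I \<subseteq> U"
    then have "finite I" "\<not> K \<subseteq> I" using U False finite_subset by auto
    then show "ufc (fac K s * V) I = ufc V I" using K by (simp add: ufc_fac_mult)
  qed
  then show ?thesis by (rule EE_agree)
qed

lemma ufc_fac_empty: "finite K \<Longrightarrow> K \<noteq> {} \<Longrightarrow> ufc (fac K s * V) {} = ufc V {}"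
  by (simp add: ufc_fac_mult)

lemma EE_facs:
  fixes V :: "real fps uf"
  assumes U: "finite U" "card U \<le> n" and ss: "string_system g tau" and g: "2 \<le> g"
  shows "okL L \<Longrightarrow> ufc V {} = 1 \<Longrightarrow> EE g n tau U (facs L * V) = EE g n tau U V"
proof (induction L arbitrary: V)
  case Nil then show ?case by (simp add: facs_def)
next
  case (Cons p L)
  obtain K s where p: "p = (K, s)" by (cases p)
  have K: "finite K" "K \<noteq> {}" using Cons.prems p by (auto simp: okL_def)
  have L: "okL L" using Cons.prems by (simp add: okL_def)
  have "facs (p # L) * V = fac K s * (facs L * V)" using p by (simp add: facs_def mult.assoc)
  moreover have V1: "ufc (facs L * V) {} = 1"
  proof -
    have "ufc (facs L) {} = 1" using L
    proof (induction L)
      case Nil then show ?case by (simp add: facs_def)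
    next
      case (Cons q L)
      obtain K' s' where q: "q = (K', s')" by (cases q)
      have "finite K'" "K' \<noteq> {}" using Cons.prems q by (auto simp: okL_def)
      moreover have "okL L" using Cons.prems by (simp add: okL_def)
      ultimately show ?case using Cons.IH q by (simp add: facs_def ufc_fac_empty)
    qed
    then show ?thesis using Cons.prems by (simp add: ufc_mult)
  qed
  ultimately show ?case using EE_step'[OF U K ss g V1] Cons.IH[OF L Cons.prems(2)] by simp
qed

lemma mono_uminus: "mono K (- c) = - mono K (c :: 'a :: comm_ring_1)"
  by (rule uf_eqI) (simp add: ufc_mono)

lemma facs_inv:
  assumes "okL L"
  shows "facs (map (\<lambda>(K, s). (K, - s)) L) * facs L = 1"
  using assms
proof (induction L)
  case Nil then show ?case by (simp add: facs_def)
next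
  case (Cons p L)
  obtain K s where p: "p = (K, s)" by (cases p)
  have K: "K \<noteq> {}" using Cons.prems p by (auto simp: okL_def)
  have L: "okL L" using Cons.prems by (simp add: okL_def)
  let ?x = "mono K (fps_const s * fps_X ^ (card K - 1))"
  have c: "fps_const (- s) * fps_X ^ (card K - 1) = - (fps_const s * fps_X ^ (card K - 1))"
    by (simp add: fps_const_neg[symmetric] del: fps_const_neg)
  have "fac K (- s) = 1 - ?x" unfolding fac_def c mono_uminus by simp
  then have "fac K (- s) * fac K s = (1 - ?x) * (1 + ?x)" by (simp add: fac_def)
  also have "\<dots> = 1 - ?x * ?x" by (simp add: algebra_simps)
  also have "?x * ?x = 0" by (rule mono_sq[OF K])
  finally have f: "fac K (- s) * fac K s = 1" by simp
  have "facs (map (\<lambda>(K, s). (K, - s)) (p # L)) * facs (p # L) =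
      (fac K (- s) * fac K s) * (facs (map (\<lambda>(K, s). (K, - s)) L) * facs L)"
    using p by (simp add: facs_def algebra_simps)
  then show ?case using f Cons.IH[OF L] by simp
qed

lemma okL_neg: "okL L \<Longrightarrow> okL (map (\<lambda>(K, s). (K, - s)) L)"
  by (auto simp: okL_def)


lemma WV_V0:
  assumes "finite I"
  shows "WV (Yh (fKQ a qs)) I d = Qpol (d + int (card I) - 1) (\<Sum>l\<in>I. a l)"
proof (cases "d + int (card I) - 1 < 0")
  case True then show ?thesis by (simp add: WV_def Qpol_def)
next
  case False
  then have "WV (Yh (fKQ a qs)) I d = qs (aL a I) $ nat (d + int (card I) - 1)"
    using assms by (simp add: WV_def Yh_fK)
  also have "\<dots> = Qpol (d + int (card I) - 1) (\<Sum>l\<in>I. a l)"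
    using False by (simp add: qs_def aL_def)
  finally show ?thesis .
qed

lemma E_eq:
  "E_gn g n tau a = EE g n tau {1..n} (Yh (fKQ a qs))"
  unfolding E_gn_def EE_def
proof (rule sum.cong[OF refl])
  fix k assume k: "k \<in> {1..n}"
  have osp: "ordered_set_partitions n k = ospU {1..n} k"
    by (simp add: ordered_set_partitions_def ospU_def)
  have "(\<Sum>Is\<in>ordered_set_partitions n k. \<Sum>ds\<in>d_range g Is. tau ds *
      (\<Prod>j<k. Qpol (ds ! j + int (card (Is ! j)) - 1) (\<Sum>l\<in>Is ! j. a l))) =
    (\<Sum>Is\<in>ospU {1..n} k. \<Sum>ds\<in>box g n k. tau ds * (\<Prod>j<k. WV (Yh (fKQ a qs)) (Is ! j) (ds ! j)))"
    unfolding osp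
  proof (rule sum.cong[OF refl])
    fix Is assume Is: "Is \<in> ospU {1..n} k"
    have len: "length Is = k" using Is by (simp add: ospU_def)
    have sub: "Is ! j \<subseteq> {1..n}" if "j < k" for j
    proof -
      have "Is ! j \<in> set Is" using that len by simp
      then show ?thesis using Is by (auto simp: ospU_def)
    qed
    have fin: "finite (Is ! j)" if "j < k" for j using sub[OF that] finite_subset by blast
    have cn: "card (Is ! j) \<le> n" if "j < k" for j using card_mono[OF _ sub[OF that]] by simp
    have W: "(\<Prod>j<k. WV (Yh (fKQ a qs)) (Is ! j) (ds ! j)) =
        (\<Prod>j<k. Qpol (ds ! j + int (card (Is ! j)) - 1) (\<Sum>l\<in>Is ! j. a l))" for ds
      by (rule prod.cong[OF refl]) (simp add: WV_V0 fin)
    have "(\<Sum>ds\<in>d_range g Is. tau ds * (\<Prod>j<k. Qpol (ds ! j + int (card (Is ! j)) - 1) (\<Sum>l\<in>Is ! j. a l))) =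
        (\<Sum>ds\<in>box g n k. tau ds * (\<Prod>j<k. Qpol (ds ! j + int (card (Is ! j)) - 1) (\<Sum>l\<in>Is ! j. a l)))"
    proof (rule sum.mono_neutral_left)
      show "finite (box g n k)" by (rule finite_boxS[of "- int n"]) simp
      show "d_range g Is \<subseteq> box g n k"
      proof
        fix ds assume ds: "ds \<in> d_range g Is"
        have "\<forall>i<k. - int n \<le> ds ! i"
        proof (intro allI impI)
          fix i assume i: "i < k"
          have "ds ! i + int (card (Is ! i)) - 1 \<ge> 0" using ds i len by (simp add: d_range_def)
          then show "- int n \<le> ds ! i" using cn[OF i] by linarith
        qed
        then show "ds \<in> box g n k" using ds len by (simp add: d_range_def boxS_def)
      qed
      show "\<forall>ds\<in>box g n k - d_range g Is. tau ds * (\<Prod>j<k. Qpol (ds ! j + int (card (Is ! j)) - 1) (\<Sum>l\<in>Is ! j. a l)) = 0"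
      proof
        fix ds assume ds: "ds \<in> box g n k - d_range g Is"
        then obtain j where j: "j < k" "ds ! j + int (card (Is ! j)) - 1 < 0"
          using len by (auto simp: d_range_def boxS_def not_le)
        then have "Qpol (ds ! j + int (card (Is ! j)) - 1) (\<Sum>l\<in>Is ! j. a l) = 0" by (simp add: Qpol_def)
        then have "(\<Prod>j<k. Qpol (ds ! j + int (card (Is ! j)) - 1) (\<Sum>l\<in>Is ! j. a l)) = 0"
          using j by (intro prod_zero) auto
        then show "tau ds * (\<Prod>j<k. Qpol (ds ! j + int (card (Is ! j)) - 1) (\<Sum>l\<in>Is ! j. a l)) = 0" by simp
      qed
    qed
    then show "(\<Sum>ds\<in>d_range g Is. tau ds * (\<Prod>j<k. Qpol (ds ! j + int (card (Is ! j)) - 1) (\<Sum>l\<in>Is ! j. a l))) =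
        (\<Sum>ds\<in>box g n k. tau ds * (\<Prod>j<k. WV (Yh (fKQ a qs)) (Is ! j) (ds ! j)))"
      by (simp add: W)
  qed
  then show "(-1) ^ k / fact k * (\<Sum>Is\<in>ordered_set_partitions n k. \<Sum>ds\<in>d_range g Is. tau ds *
      (\<Prod>j<k. Qpol (ds ! j + int (card (Is ! j)) - 1) (\<Sum>l\<in>Is ! j. a l))) =
    (-1) ^ k / fact k * (\<Sum>Is\<in>ospU {1..n} k. \<Sum>ds\<in>box g n k. tau ds * (\<Prod>j<k. WV (Yh (fKQ a qs)) (Is ! j) (ds ! j)))"
    by simp
qed

lemma EE_reg_zero:
  assumes R: "OneO {1..n} R" and t: "\<exists>d\<in>set t. d < 0"
    and init: "\<And>ds. initial_tuple g ds \<Longrightarrow> tau ds = (if mset ds = mset t then 1 else 0)"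
  shows "EE g n tau {1..n} R = 0"
  unfolding EE_def
proof (intro sum.neutral ballI)
  fix k assume k: "k \<in> {1..n}"
  have "tau ds * (\<Prod>j<k. WV R (Is ! j) (ds ! j)) = 0" if Is: "Is \<in> ospU {1..n} k" and ds: "ds \<in> box g n k" for Is ds
  proof (cases "\<exists>j<k. ds ! j \<le> 0")
    case True
    then obtain j where j: "j < k" "ds ! j \<le> 0" by blast
    have len: "length Is = k" using Is by (simp add: ospU_def)
    have "Is ! j \<in> set Is" using j len by simp
    then have sub: "Is ! j \<subseteq> {1..n}" "Is ! j \<noteq> {}" using Is j by (auto simp: ospU_def)
    have "WV R (Is ! j) (ds ! j) = 0"
    proof (cases "ds ! j + int (card (Is ! j)) - 1 < 0")
      case False
      have "nat (ds ! j + int (card (Is ! j)) - 1) < card (Is ! j)" using False j by linarith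
      moreover have "ordge (card (Is ! j)) (ufc R (Is ! j))" using R sub by (simp add: OneO_def)
      ultimately show ?thesis using False by (simp add: WV_def ordge_def)
    qed (simp add: WV_def)
    then have "(\<Prod>j<k. WV R (Is ! j) (ds ! j)) = 0" using j by (intro prod_zero) auto
    then show ?thesis by simp
  next
    case False
    have len: "length ds = k" using ds by (simp add: boxS_def)
    have pos: "\<forall>d\<in>set ds. 0 < d" using False len by (auto simp: in_set_conv_nth not_le)
    have "initial_tuple g ds"
      using ds len k pos by (auto simp: initial_tuple_def corr_dom_def boxS_def)
    moreover have "mset ds \<noteq> mset t"
    proof
      assume "mset ds = mset t"
      then have "set ds = set t" by (metis set_mset_mset)
      then show False using t pos by auto
    qed
    ultimately have "tau ds = 0" using init by simp
    then show ?thesis by simp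
  qed
  then have "(\<Sum>Is\<in>ospU {1..n} k. \<Sum>ds\<in>box g n k. tau ds * (\<Prod>j<k. WV R (Is ! j) (ds ! j))) = 0"
    by (intro sum.neutral ballI)
  then show "(-1) ^ k / fact k * (\<Sum>Is\<in>ospU {1..n} k. \<Sum>ds\<in>box g n k. tau ds * (\<Prod>j<k. WV R (Is ! j) (ds ! j))) = 0"
    by simp
qed

theorem proposition4p5:
  fixes g n :: nat and t :: "int list" and tau :: "int list \<Rightarrow> real"
  assumes "g \<ge> 2" and "n \<ge> 2"
    and "initial_tuple g t" and "\<exists>d\<in>set t. d < 0"
    and "string_system g tau"
    and "\<And>ds. initial_tuple g ds \<Longrightarrow> tau ds = (if mset ds = mset t then 1 else 0)"
  shows "\<forall>a :: nat \<Rightarrow> real. E_gn g n tau a = 0"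
proof
  fix a :: "nat \<Rightarrow> real"
  let ?U = "{1..n}"
  let ?V = "Yh (fKQ a qs)"
  have U: "finite ?U" "card ?U \<le> n" by simp_all
  have V0: "ufc ?V {} = 1" by (rule Yh_empty[OF adm_fK])
  obtain L R where L: "okL L" and R: "OneO ?U R" and ag: "agree ?U ?V (facs L * R)"
    using Good_family[OF adm_fK U(1)] unfolding Good_def by blast
  let ?L' = "map (\<lambda>(K, s). (K, - s)) L"
  have "E_gn g n tau a = EE g n tau ?U ?V" by (rule E_eq)
  also have "\<dots> = EE g n tau ?U (facs ?L' * ?V)"
    by (rule EE_facs[OF U assms(5) assms(1) okL_neg[OF L] V0, symmetric])
  also have "\<dots> = EE g n tau ?U (facs ?L' * (facs L * R))"
  proof (rule EE_agree)
    have "agree ?U (?V * facs ?L') (facs L * R * facs ?L')" by (rule agree_mult[OF U(1) ag])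
    then show "agree ?U (facs ?L' * ?V) (facs ?L' * (facs L * R))" by (simp add: mult.commute)
  qed
  also have "facs ?L' * (facs L * R) = R"
    using facs_inv[OF L] by (simp add: mult.assoc[symmetric])
  also have "EE g n tau ?U R = 0" by (rule EE_reg_zero[OF R assms(4,6)])
  finally show "E_gn g n tau a = 0" .
qed


end
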